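(* Let $(\vec X_1,Y_1),\ldots,(\vec X_n,Y_n),(\vec X'_1,Y'_1),\ldots,(\vec X'_n,Y'_n),(\vec X_{n+1},Y_{n+1})$ be i.i.d. random pairs with $\vec X\in\mathcal X$, $Y\in\mathbb R$, and let $F(y\mid\vec x)$ be the conditional distribution function of $Y$ given $\vec X=\vec x$. For each $n$ let $\widehat F=\widehat F_n$ be an estimate of $F$ computed only from $\mathbb D'=\{(\vec X'_i,Y'_i)\}_{i=1}^n$. Fix $\alpha\in(0,1)$, let $\mathcal T(\mathbb D)=\{\widehat F(Y_i\mid\vec X_i):i=1,\ldots,n\}$ and $$C_n(\vec x)=\left[\widehat F^{-1}\big(q(\alpha/2;\mathcal T(\mathbb D))\mid\vec x\big),\ \widehat F^{-1}\big(q(1-\alpha/2;\mathcal T(\mathbb D))\mid\vec x\big)\right].$$ Assume: (A1) there exist sequences $\eta_n=o(1)$ and $\rho_n=o(1)$ such that $\mathbb P\Big(\mathbb E\big[\sup_{y\in\mathbb R}(\widehat F(y\mid\vec X)-F(y\mid\vec X))^2\,\big|\,\widehat F\big]\ge\eta_n\Big)\le\rho_n$, where $\vec X$ is an independent copy of the features; (A2) for every $\vec x$, $F(y\mid\vec x)$ is differentiable in $y$, and there exists $M>0$ such that $\inf_{\vec x}\frac{dF(y\mid\vec x)}{dy}\ge M^{-1}$ for $y$ in a neighborhood of $F^{-1}(\alpha/2\mid\vec x)$ and of $F^{-1}(1-\alpha/2\mid\vec x)$. Let $C^*(\vec x)=[F^{-1}(\alpha/2\mid\vec x),\,F^{-1}(1-\alpha/2\mid\vec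 x)]$ be the oracle interval. Then $$\lambda\big(C_n(\vec X_{n+1})\,\Delta\,C^*(\vec X_{n+1})\big)=o_{\mathbb P}(1),$$ where $\lambda$ is Lebesgue measure and $\Delta$ is symmetric difference.
   Context: For a finite set of reals $\{t_1,\ldots,t_m\}$, $q(\beta;\{t_1,\ldots,t_m\})$ denotes its empirical $\beta$ quantile. $\widehat F^{-1}(\cdot\mid\vec x)$ and $F^{-1}(\cdot\mid\vec x)$ denote the (generalized) inverses of the distribution functions in $y$. *)

theory Defs
  imports "HOL-Probability.Probability"
begin

definition is_cdf :: "(real \<Rightarrow> real) \<Rightarrow> bool" where
  "is_cdf G \<longleftrightarrow> mono G \<and> (\<forall>y. continuous (at_right y) G)
      \<and> (G \<longlongrightarrow> 0) at_bot \<and> (G \<longlongrightarrow> 1) at_top"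

definition ginv :: "(real \<Rightarrow> real) \<Rightarrow> real \<Rightarrow> real" where
  "ginv G p = Inf {y. p \<le> G y}"

text \<open>Empirical beta-quantile of the values t i, i in the finite index set I
  (generalized inverse of the empirical distribution function).\<close>
definition emp_quantile :: "real \<Rightarrow> nat set \<Rightarrow> (nat \<Rightarrow> real) \<Rightarrow> real" where
  "emp_quantile \<beta> I t = Inf {s. \<beta> * real (card I) \<le> real (card {i\<in>I. t i \<le> s})}"

text \<open>F is (a version of) the conditional distribution function of Y given X = x,
  where P is the joint law of (X,Y) on Mx x borel.\<close>
definition cond_cdf :: "('a \<times> real) measure \<Rightarrow> 'a measure \<Rightarrow> ('a \<Rightarrow> real \<Rightarrow> real) \<Rightarrow> bool" where
  "cond_cdf P Mx F \<longleftrightarrow> (\<forall>x. is_cdf (F x)) \<and> (\<forall>y. (\<lambda>x. F x y) \<in> borel_measurable Mx)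
     \<and> (\<forall>A\<in>sets Mx. \<forall>y. measure P (A \<times> {..y}) = (\<integral>x. indicator A x * F x y \<partial>(distr P Mx fst)))"

definition symdiff :: "'a set \<Rightarrow> 'a set \<Rightarrow> 'a set" where
  "symdiff A B = (A - B) \<union> (B - A)"

end

theory Submission
  imports Defs
begin

lemma cdf_bounds:
  assumes "is_cdf G" shows "0 \<le> G y" "G y \<le> 1"
proof -
  have mono: "mono G" and lim0: "(G \<longlongrightarrow> 0) at_bot" and lim1: "(G \<longlongrightarrow> 1) at_top"
    using assms unfolding is_cdf_def by auto
  have "eventually (\<lambda>t. G y \<le> G t) at_top"
    using eventually_ge_at_top[of y] by eventually_elim (rule monoD[OF mono])
  then show "G y \<le> 1" using tendsto_lowerbound[OF lim1] by simp
  have "eventually (\<lambda>t. G t \<le> G y) at_bot"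
    using eventually_le_at_bot[of y] by eventually_elim (rule monoD[OF mono])
  then show "0 \<le> G y" using tendsto_upperbound[OF lim0] by simp
qed

lemma ginv_props:
  assumes "is_cdf G" "0 < p" "p < 1"
  shows "p \<le> G (ginv G p)" "\<And>y. y < ginv G p \<Longrightarrow> G y < p" "\<And>y. p \<le> G y \<Longrightarrow> ginv G p \<le> y"
proof -
  have mono: "mono G" and lim0: "(G \<longlongrightarrow> 0) at_bot" and lim1: "(G \<longlongrightarrow> 1) at_top"
    and rc: "\<And>y. continuous (at_right y) G"
    using assms unfolding is_cdf_def by auto
  define S where "S = {y. p \<le> G y}"
  have "eventually (\<lambda>t. G t > p) at_top"
    using order_tendstoD(1)[OF lim1 \<open>p<1\<close>] .
  then obtain y0 where y0: "G y0 > p" by (auto simp: eventually_at_top_linorder)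
  have "eventually (\<lambda>t. G t < p) at_bot"
    using order_tendstoD(2)[OF lim0 \<open>0<p\<close>] .
  then obtain b where b: "\<And>t. t \<le> b \<Longrightarrow> G t < p" by (auto simp: eventually_at_bot_linorder)
  have "y0 \<in> S" using y0 by (simp add: S_def)
  then have ne: "S \<noteq> {}" by auto
  have bdd: "bdd_below S"
    unfolding bdd_below_def S_def
  proof (rule exI[of _ b], safe)
    fix x assume "p \<le> G x"
    then show "b \<le> x" using b[of x] by (cases "x \<le> b") auto
  qed
  have g: "ginv G p = Inf S" by (simp add: ginv_def S_def)
  show low: "\<And>y. p \<le> G y \<Longrightarrow> ginv G p \<le> y"
    unfolding g by (rule cInf_lower[OF _ bdd]) (simp add: S_def)
  show "\<And>y. y < ginv G p \<Longrightarrow> G y < p"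
    using low by (meson not_le)
  have "eventually (\<lambda>t. p \<le> G t) (at_right (Inf S))"
    using eventually_at_right_less[of "Inf S"]
  proof eventually_elim
    case (elim t)
    then obtain s where "s \<in> S" "s < t" using cInf_lessD[OF ne elim] by auto
    then show ?case using monoD[OF mono, of s t] by (auto simp: S_def)
  qed
  moreover have "(G \<longlongrightarrow> G (Inf S)) (at_right (Inf S))"
    using rc[of "Inf S"] by (simp add: continuous_within)
  ultimately show "p \<le> G (ginv G p)" unfolding g
    using tendsto_lowerbound trivial_limit_at_right_real by blast
qed

lemma eventually_at_left_less': "eventually (\<lambda>t. t < (g::real)) (at_left g)"
  by (simp add: eventually_at_filter)

lemma ginv_cont:
  assumes "is_cdf G" "0 < p" "p < 1" "isCont G (ginv G p)"
  shows "G (ginv G p) = p"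
proof -
  have "eventually (\<lambda>t. G t \<le> p) (at_left (ginv G p))"
    using eventually_at_left_less'[of "ginv G p"]
    by eventually_elim (auto dest: ginv_props(2)[OF assms(1-3)] intro: less_imp_le)
  moreover have "(G \<longlongrightarrow> G (ginv G p)) (at_left (ginv G p))"
    using assms(4) by (simp add: filterlim_at_split isCont_def)
  ultimately have "G (ginv G p) \<le> p"
    using tendsto_upperbound trivial_limit_at_left_real by blast
  with ginv_props(1)[OF assms(1-3)] show ?thesis by simp
qed

lemma ginv_close:
  fixes F G :: "real \<Rightarrow> real"
  assumes mono: "mono F" and Fq: "F q = \<beta>" and up: "\<beta> + h/Mb \<le> F (q+h)" and lo: "F (q-h) \<le> \<beta> - h/Mb"
    and err: "\<And>y. \<bar>G y - F y\<bar> \<le> e" and small: "\<bar>p - \<beta>\<bar> + e < h/Mb"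
  shows "\<bar>ginv G p - q\<bar> \<le> h"
proof -
  define S where "S = {y. p \<le> G y}"
  have inS: "q + h \<in> S"
    using err[of "q+h"] up small by (auto simp: S_def abs_le_iff)
  have lb: "q - h \<le> y" if "y \<in> S" for y
  proof (rule ccontr)
    assume "\<not> q - h \<le> y"
    then have "F y \<le> F (q-h)" using monoD[OF mono] by auto
    then show False using that err[of y] lo small by (auto simp: S_def abs_le_iff)
  qed
  have bdd: "bdd_below S" using lb by (auto simp: bdd_below_def)
  have "Inf S \<le> q + h" by (rule cInf_lower[OF inS bdd])
  moreover have "q - h \<le> Inf S" using inS lb by (intro cInf_greatest) auto
  ultimately show ?thesis by (simp add: ginv_def S_def[symmetric] abs_le_iff)
qed

lemma mvt_lb:
  fixes F :: "real \<Rightarrow> real"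
  assumes diff: "\<And>y. F differentiable at y" and der: "\<And>y. \<bar>y - q\<bar> < \<delta> \<Longrightarrow> 1/Mb \<le> deriv F y"
    and h: "0 \<le> h" "h < \<delta>"
  shows "F q + h/Mb \<le> F (q+h)" "F (q-h) \<le> F q - h/Mb"
proof -
  have D: "\<And>x. (F has_real_derivative deriv F x) (at x)"
    using diff DERIV_deriv_iff_real_differentiable by blast
  show "F q + h/Mb \<le> F (q+h)"
  proof (cases "h = 0")
    case False
    then obtain z where z: "q < z" "z < q + h" "F (q+h) - F q = (q + h - q) * deriv F z"
      using MVT2[of q "q+h" F "deriv F"] D h by auto
    have "1/Mb \<le> deriv F z" using z h by (intro der) auto
    then have "h * (1/Mb) \<le> h * deriv F z" using h by (intro mult_left_mono) auto
    then show ?thesis using z by simp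
  qed simp
  show "F (q-h) \<le> F q - h/Mb"
  proof (cases "h = 0")
    case False
    then obtain z where z: "q - h < z" "z < q" "F q - F (q-h) = (q - (q - h)) * deriv F z"
      using MVT2[of "q-h" q F "deriv F"] D h by auto
    have "1/Mb \<le> deriv F z" using z h by (intro der) auto
    then have "h * (1/Mb) \<le> h * deriv F z" using h by (intro mult_left_mono) auto
    then show ?thesis using z by simp
  qed simp
qed

lemma emp_q_upper:
  assumes "finite I" "I \<noteq> {}" "0 < \<beta>" "s < emp_quantile \<beta> I t"
  shows "real (card {i\<in>I. t i \<le> s}) < \<beta> * card I"
proof (rule ccontr)
  define S where "S = {s. \<beta> * real (card I) \<le> real (card {i\<in>I. t i \<le> s})}"
  assume "\<not> ?thesis"
  then have sS: "s \<in> S" by (simp add: S_def)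
  have "Min (t ` I) \<le> s'" if "s' \<in> S" for s'
  proof -
    have "0 < \<beta> * card I" using assms by (simp add: card_gt_0_iff)
    then have "0 < real (card {i\<in>I. t i \<le> s'})" using that by (simp add: S_def)
    then have "{i\<in>I. t i \<le> s'} \<noteq> {}" by (metis card.empty of_nat_0 less_irrefl)
    then obtain i where "i \<in> I" "t i \<le> s'" by auto
    then show ?thesis using assms(1) by (meson Min_le dual_order.trans finite_imageI imageI)
  qed
  then have "bdd_below S" by (auto simp: bdd_below_def)
  then have "Inf S \<le> s" using sS cInf_lower by blast
  then show False using assms(4) by (simp add: emp_quantile_def S_def)
qed

lemma emp_q_lower:
  assumes "finite I" "I \<noteq> {}" "\<beta> \<le> 1" "emp_quantile \<beta> I t < s"
  shows "\<beta> * card I \<le> real (card {i\<in>I. t i \<le> s})"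
proof -
  define S where "S = {s. \<beta> * real (card I) \<le> real (card {i\<in>I. t i \<le> s})}"
  have "Max (t ` I) \<in> S"
  proof -
    have "{i\<in>I. t i \<le> Max (t ` I)} = I" using assms(1) by auto
    moreover have "\<beta> * card I \<le> 1 * real (card I)" using assms(3) by (intro mult_right_mono) auto
    ultimately show ?thesis by (simp add: S_def)
  qed
  then have ne: "S \<noteq> {}" by auto
  obtain s' where "s' \<in> S" "s' < s" using cInf_lessD[OF ne] assms(4) by (auto simp: emp_quantile_def S_def)
  moreover have "card {i\<in>I. t i \<le> s'} \<le> card {i\<in>I. t i \<le> s}"
    using \<open>s' < s\<close> assms(1) by (intro card_mono) auto
  ultimately show ?thesis by (simp add: S_def)
qed

lemma symdiff_Icc:
  fixes a b c d :: real
  shows "measure lborel (symdiff {a..b} {c..d}) \<le> \<bar>a - c\<bar> + \<bar>b - d\<bar>"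
proof -
  have sub: "symdiff {a..b} {c..d} \<subseteq> {min a c..max a c} \<union> {min b d..max b d}"
    by (auto simp: symdiff_def)
  have "measure lborel (symdiff {a..b} {c..d}) \<le> measure lborel ({min a c..max a c} \<union> {min b d..max b d})"
  proof (rule measure_mono_fmeasurable[OF sub])
    have "\<And>x y::real. {x..y} \<in> fmeasurable lborel"
      by (intro fmeasurableI) (auto simp: emeasure_lborel_Icc_eq)
    then show "{min a c..max a c} \<union> {min b d..max b d} \<in> fmeasurable lborel"
      by (intro fmeasurable.Un)
  qed (auto simp: symdiff_def)
  also have "\<dots> \<le> measure lborel {min a c..max a c} + measure lborel {min b d..max b d}"
    by (rule measure_Un_le) auto
  also have "\<dots> = \<bar>a - c\<bar> + \<bar>b - d\<bar>" by (simp add: abs_real_def)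
  finally show ?thesis .
qed

lemma pit_finite:
  fixes P :: "('a \<times> real) measure" and Mx :: "'a measure" and F :: "'a \<Rightarrow> real \<Rightarrow> real"
  assumes P: "prob_space P" and sP: "sets P = sets (Mx \<Otimes>\<^sub>M borel)"
    and cF: "cond_cdf P Mx F" and R: "finite R"
  shows "{z\<in>space P. \<exists>r\<in>R. F (fst z) r < v \<and> snd z \<le> r} \<in> sets P \<and>
     integrable (distr P Mx fst) (\<lambda>x. if \<exists>r\<in>R. F x r < v then F x (Max {r\<in>R. F x r < v}) else 0) \<and>
     measure P {z\<in>space P. \<exists>r\<in>R. F (fst z) r < v \<and> snd z \<le> r} =
       (\<integral>x. (if \<exists>r\<in>R. F x r < v then F x (Max {r\<in>R. F x r < v}) else 0) \<partial>(distr P Mx fst))"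
  using R
proof (induction R rule: finite_ranking_induct[where f = uminus])
  case empty then show ?case by simp
next
  case (insert r0 R)
  interpret P: prob_space P by (rule P)
  have spP: "space P = space Mx \<times> UNIV"
    using sets_eq_imp_space_eq[OF sP] by (simp add: space_pair_measure)
  have Fm: "\<And>y. (\<lambda>x. F x y) \<in> borel_measurable Mx" and cdf: "\<And>x. is_cdf (F x)"
    and rect: "\<And>A y. A \<in> sets Mx \<Longrightarrow> measure P (A \<times> {..y}) = (\<integral>x. indicator A x * F x y \<partial>(distr P Mx fst))"
    using cF by (auto simp: cond_cdf_def)
  have fstm: "fst \<in> measurable P Mx"
    using measurable_cong_sets[OF sP refl] measurable_fst by blast
  have sPX: "sets (distr P Mx fst) = sets Mx" by simp
  have spPX: "space (distr P Mx fst) = space Mx" by simp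
  interpret PX: prob_space "distr P Mx fst" by (rule P.prob_space_distr[OF fstm])
  define W where "W = (\<lambda>R x. if \<exists>r\<in>R. F x r < v then F x (Max {r\<in>R. F x r < v}) else 0)"
  define S where "S = (\<lambda>R. {z\<in>space P. \<exists>r\<in>R. F (fst z) r < v \<and> snd z \<le> r})"
  define A0 where "A0 = {x\<in>space Mx. F x r0 < v \<and> \<not>(\<exists>r\<in>R. F x r < v)}"
  have IH: "S R \<in> sets P" "integrable (distr P Mx fst) (W R)"
    "measure P (S R) = (\<integral>x. W R x \<partial>(distr P Mx fst))"
    using insert.IH by (simp_all add: W_def S_def)
  have le: "\<And>y. y \<in> R \<Longrightarrow> r0 \<le> y" using insert.hyps(2) by simp
  have A0m: "A0 \<in> sets Mx"
    unfolding A0_def using insert.hyps(1) Fm by measurable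
  have B: "A0 \<times> {..r0} \<in> sets P" using A0m by (simp add: sP)
  have SR: "S (insert r0 R) = S R \<union> A0 \<times> {..r0}"
  proof (intro set_eqI iffI)
    fix z assume z: "z \<in> S (insert r0 R)"
    show "z \<in> S R \<union> A0 \<times> {..r0}"
    proof (cases "z \<in> S R")
      case False
      obtain a b where ab: "z = (a, b)" by force
      from z obtain r where r: "r \<in> insert r0 R" "F a r < v" "b \<le> r" "a \<in> space Mx"
        by (auto simp: S_def spP ab)
      have "r = r0" using r False by (auto simp: S_def spP ab)
      have "\<not>(\<exists>r\<in>R. F a r < v)"
      proof
        assume "\<exists>r\<in>R. F a r < v"
        then obtain r' where "r' \<in> R" "F a r' < v" by auto
        then have "z \<in> S R" using le[of r'] r \<open>r = r0\<close> by (auto simp: S_def spP ab)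
        then show False using False by simp
      qed
      then show ?thesis using r \<open>r = r0\<close> by (auto simp: A0_def ab)
    qed simp
  next
    fix z assume "z \<in> S R \<union> A0 \<times> {..r0}"
    then show "z \<in> S (insert r0 R)" by (auto simp: S_def A0_def spP)
  qed
  have disj: "S R \<inter> A0 \<times> {..r0} = {}" by (auto simp: S_def A0_def)
  have Fb: "\<And>x y. 0 \<le> F x y \<and> F x y \<le> 1" using cdf cdf_bounds by blast
  have int2: "integrable (distr P Mx fst) (\<lambda>x. indicator A0 x * F x r0)"
    by (rule PX.integrable_const_bound[of _ 1]) (use Fb A0m Fm in \<open>auto simp: indicator_def\<close>)
  have Weq: "W (insert r0 R) x = W R x + indicator A0 x * F x r0" if x: "x \<in> space Mx" for x
  proof (cases "\<exists>r\<in>R. F x r < v")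
    case True
    let ?T = "{r\<in>R. F x r < v}"
    have fin: "finite ?T" "?T \<noteq> {}" using True insert.hyps(1) by auto
    have "Max ?T \<in> ?T" by (rule Max_in[OF fin])
    then have "r0 \<le> Max ?T" using le by blast
    then have "Max (insert r0 ?T) = Max ?T" using fin by (simp add: max_def)
    moreover have "{r\<in>insert r0 R. F x r < v} = (if F x r0 < v then insert r0 ?T else ?T)" by auto
    ultimately show ?thesis using True by (auto simp: W_def A0_def)
  next
    case False
    then have "{r\<in>insert r0 R. F x r < v} = (if F x r0 < v then {r0} else {})" by auto
    then show ?thesis using False x by (auto simp: W_def A0_def)
  qed
  have "integrable (distr P Mx fst) (\<lambda>x. W R x + indicator A0 x * F x r0)"
    using IH(2) int2 by (rule Bochner_Integration.integrable_add)
  moreover have "integrable (distr P Mx fst) (W (insert r0 R)) \<longleftrightarrow>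
      integrable (distr P Mx fst) (\<lambda>x. W R x + indicator A0 x * F x r0)"
    by (rule Bochner_Integration.integrable_cong) (use Weq in auto)
  ultimately have int3: "integrable (distr P Mx fst) (W (insert r0 R))" by simp
  have "measure P (S (insert r0 R)) = measure P (S R) + measure P (A0 \<times> {..r0})"
    unfolding SR by (rule P.finite_measure_Union[OF IH(1) B disj])
  also have "\<dots> = (\<integral>x. W R x \<partial>(distr P Mx fst)) + (\<integral>x. indicator A0 x * F x r0 \<partial>(distr P Mx fst))"
    using IH(3) rect[OF A0m] by simp
  also have "\<dots> = (\<integral>x. W R x + indicator A0 x * F x r0 \<partial>(distr P Mx fst))"
    using IH(2) int2 by simp
  also have "\<dots> = (\<integral>x. W (insert r0 R) x \<partial>(distr P Mx fst))"
    by (rule Bochner_Integration.integral_cong) (use Weq in auto)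
  finally have "measure P (S (insert r0 R)) = (\<integral>x. W (insert r0 R) x \<partial>(distr P Mx fst))" .
  moreover have "S (insert r0 R) \<in> sets P" using IH(1) B SR by auto
  ultimately show ?case using int3 by (simp add: W_def S_def)
qed

lemma pit:
  fixes P :: "('a \<times> real) measure" and Mx :: "'a measure" and F :: "'a \<Rightarrow> real \<Rightarrow> real"
  assumes P: "prob_space P" and sP: "sets P = sets (Mx \<Otimes>\<^sub>M borel)"
    and cF: "cond_cdf P Mx F" and cont: "\<And>x y. isCont (F x) y" and v: "0 < v" "v < 1"
  shows "{z\<in>space P. F (fst z) (snd z) < v} \<in> sets P"
    "measure P {z\<in>space P. F (fst z) (snd z) < v} = v"
proof -
  interpret P: prob_space P by (rule P)
  have fstm: "fst \<in> measurable P Mx"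
    using measurable_cong_sets[OF sP refl] measurable_fst by blast
  interpret PX: prob_space "distr P Mx fst" by (rule P.prob_space_distr[OF fstm])
  have Fm: "\<And>y. (\<lambda>x. F x y) \<in> borel_measurable Mx" and cdf: "\<And>x. is_cdf (F x)"
    using cF by (auto simp: cond_cdf_def)
  have Fb: "\<And>x y. 0 \<le> F x y \<and> F x y \<le> 1" using cdf cdf_bounds by blast
  have monoF: "\<And>x a b. a \<le> b \<Longrightarrow> F x a \<le> F x b" using cdf by (auto simp: is_cdf_def mono_def)
  have rc: "\<And>a y. continuous (at_right y) (F a)" using cdf by (auto simp: is_cdf_def)
  define q where "q = from_nat_into (\<rat>::real set)"
  have qR: "range q = \<rat>" unfolding q_def by (rule range_from_nat_into) (auto simp: countable_rat)
  define R where "R = (\<lambda>k. q ` {..<k})"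
  define W where "W = (\<lambda>R x. if \<exists>r\<in>R. F x r < v then F x (Max {r\<in>R. F x r < v}) else 0)"
  define S where "S = (\<lambda>R. {z\<in>space P. \<exists>r\<in>R. F (fst z) r < v \<and> snd z \<le> r})"
  define E where "E = {z\<in>space P. F (fst z) (snd z) < v}"
  have fin: "\<And>k. finite (R k)" by (simp add: R_def)
  have PF: "\<And>k. S (R k) \<in> sets P \<and> integrable (distr P Mx fst) (W (R k)) \<and>
     measure P (S (R k)) = (\<integral>x. W (R k) x \<partial>(distr P Mx fst))"
    unfolding S_def W_def by (rule pit_finite[OF P sP cF fin])
  have inc: "incseq (\<lambda>k. S (R k))"
    by (auto simp: incseq_def S_def R_def)
  have UE: "(\<Union>k. S (R k)) = E"
  proof (intro set_eqI iffI)
    fix z assume "z \<in> (\<Union>k. S (R k))"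
    then show "z \<in> E" by (auto simp: S_def E_def) (meson monoF le_less_trans)
  next
    fix z assume z: "z \<in> E"
    obtain a b where ab: "z = (a, b)" by force
    have "eventually (\<lambda>t. F a t < v) (at_right b)"
      using rc[of b a] z by (intro order_tendstoD(2)) (auto simp: continuous_within E_def ab)
    then obtain c where c: "c > b" "\<And>t. b < t \<Longrightarrow> t < c \<Longrightarrow> F a t < v"
      by (auto simp: eventually_at_right_field)
    obtain r where r: "r \<in> \<rat>" "b < r" "r < c" using Rats_dense_in_real[OF c(1)] by auto
    then obtain m where "q m = r" using qR by (metis rangeE)
    then have "r \<in> R (Suc m)" by (auto simp: R_def)
    then have "z \<in> S (R (Suc m))" using z r c by (auto simp: S_def E_def ab intro!: bexI[of _ r])
    then show "z \<in> (\<Union>k. S (R k))" by auto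
  qed
  have Em: "E \<in> sets P" unfolding UE[symmetric] using PF by auto
  then show "{z\<in>space P. F (fst z) (snd z) < v} \<in> sets P" by (simp add: E_def)
  have lim1: "(\<lambda>k. measure P (S (R k))) \<longlonglongrightarrow> measure P E"
    unfolding UE[symmetric] using PF inc by (intro P.finite_Lim_measure_incseq) auto
  have ptw: "(\<lambda>k. W (R k) x) \<longlonglongrightarrow> v" for x
  proof (rule LIMSEQ_I)
    fix e :: real assume e: "0 < e"
    define g where "g = ginv (F x) v"
    have Fg: "F x g = v" unfolding g_def by (rule ginv_cont[OF cdf v cont])
    obtain d where d: "d > 0" "\<And>t. dist t g < d \<Longrightarrow> dist (F x t) (F x g) < e"
      using cont[where x=x and y=g] e unfolding continuous_at_eps_delta by blast
    obtain r where r: "r \<in> \<rat>" "g - d < r" "r < g" using Rats_dense_in_real[of "g - d" g] d by auto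
    have Fr: "F x r < v" using r ginv_props(2)[OF cdf v] by (simp add: g_def)
    have Fr2: "F x r > v - e" using d(2)[of r] r Fg by (auto simp: dist_real_def)
    obtain m where "q m = r" using qR r by (metis rangeE)
    show "\<exists>no. \<forall>k\<ge>no. norm (W (R k) x - v) < e"
    proof (intro exI[of _ "Suc m"] allI impI)
      fix k assume k: "Suc m \<le> k"
      then have rk: "r \<in> R k" using \<open>q m = r\<close> by (auto simp: R_def)
      let ?T = "{r\<in>R k. F x r < v}"
      have Tne: "finite ?T" "?T \<noteq> {}" using fin rk Fr by auto
      have "r \<le> Max ?T" using rk Fr Tne by (intro Max_ge) auto
      then have "F x r \<le> F x (Max ?T)" by (rule monoF)
      moreover have "F x (Max ?T) < v" using Max_in[OF Tne] by auto
      ultimately show "norm (W (R k) x - v) < e" using rk Fr Fr2 by (auto simp: W_def)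
    qed
  qed
  have lim2: "(\<lambda>k. \<integral>x. W (R k) x \<partial>(distr P Mx fst)) \<longlonglongrightarrow> (\<integral>x. v \<partial>(distr P Mx fst))"
  proof (rule integral_dominated_convergence[where w = "\<lambda>_. 1"])
    show "\<And>k. W (R k) \<in> borel_measurable (distr P Mx fst)" using PF by (blast intro: borel_measurable_integrable)
    show "\<And>k. AE x in distr P Mx fst. norm (W (R k) x) \<le> 1" using Fb by (auto simp: W_def)
  qed (use ptw in auto)
  have one: "measure (distr P Mx fst) (space Mx) = 1" using PX.prob_space by simp
  have "measure P E = v"
    using LIMSEQ_unique[OF lim1] lim2 PF one by simp
  then show "measure P {z\<in>space P. F (fst z) (snd z) < v} = v" by (simp add: E_def)
qed

definition dev :: "(real \<Rightarrow> real) \<Rightarrow> (real \<Rightarrow> real) \<Rightarrow> real" where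
  "dev G H = (SUP y. (G y - H y)\<^sup>2)"

lemma dev_props:
  assumes G: "is_cdf G" and H: "is_cdf H"
  shows "bdd_above (range (\<lambda>y. (G y - H y)\<^sup>2))" "\<And>y. (G y - H y)\<^sup>2 \<le> dev G H"
    "dev G H \<le> 1" "0 \<le> dev G H" "dev G H = (SUP r\<in>\<rat>. (G r - H r)\<^sup>2)"
proof -
  have b: "(G y - H y)\<^sup>2 \<le> 1" for y
  proof -
    have "\<bar>G y - H y\<bar> \<le> 1" using cdf_bounds[OF G, of y] cdf_bounds[OF H, of y] by auto
    then have "\<bar>G y - H y\<bar>\<^sup>2 \<le> 1\<^sup>2" by (intro power_mono) auto
    then show ?thesis by simp
  qed
  show bdd: "bdd_above (range (\<lambda>y. (G y - H y)\<^sup>2))" using b by (auto simp: bdd_above_def)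
  show up: "\<And>y. (G y - H y)\<^sup>2 \<le> dev G H" unfolding dev_def by (rule cSUP_upper[OF _ bdd]) auto
  show "dev G H \<le> 1" unfolding dev_def using b by (intro cSUP_least) auto
  show "0 \<le> dev G H" using up[of 0] by (meson order.trans zero_le_power2)
  have bddQ: "bdd_above ((\<lambda>y. (G y - H y)\<^sup>2) ` \<rat>)" using b by (auto simp: bdd_above_def)
  have "(SUP r\<in>\<rat>. (G r - H r)\<^sup>2) \<le> dev G H"
    unfolding dev_def by (rule cSUP_subset_mono[OF _ bdd]) auto
  moreover have "dev G H \<le> (SUP r\<in>\<rat>. (G r - H r)\<^sup>2)"
    unfolding dev_def
  proof (rule cSUP_least)
    fix y
    show "(G y - H y)\<^sup>2 \<le> (SUP r\<in>\<rat>. (G r - H r)\<^sup>2)"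
    proof (rule ccontr)
      assume "\<not> ?thesis"
      then have lt: "(SUP r\<in>\<rat>. (G r - H r)\<^sup>2) < (G y - H y)\<^sup>2" by simp
      have "((\<lambda>t. (G t - H t)\<^sup>2) \<longlongrightarrow> (G y - H y)\<^sup>2) (at_right y)"
        using G H unfolding is_cdf_def continuous_within by (intro tendsto_intros) auto
      from order_tendstoD(1)[OF this lt]
      obtain c where c: "c > y" "\<And>t. y < t \<Longrightarrow> t < c \<Longrightarrow> (SUP r\<in>\<rat>. (G r - H r)\<^sup>2) < (G t - H t)\<^sup>2"
        by (auto simp: eventually_at_right_field)
      obtain r where r: "r \<in> \<rat>" "y < r" "r < c" using Rats_dense_in_real[OF c(1)] by auto
      have "(G r - H r)\<^sup>2 \<le> (SUP r\<in>\<rat>. (G r - H r)\<^sup>2)" by (rule cSUP_upper[OF r(1) bddQ])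
      then show False using c(2)[OF r(2,3)] by simp
    qed
  qed simp
  ultimately show "dev G H = (SUP r\<in>\<rat>. (G r - H r)\<^sup>2)" by simp
qed

lemma dev_meas:
  fixes E :: "'d \<Rightarrow> 'a \<Rightarrow> real \<Rightarrow> real"
  assumes em: "(\<lambda>(d, x, y). E d x y) \<in> borel_measurable (N \<Otimes>\<^sub>M Mx \<Otimes>\<^sub>M borel)"
   and ec: "\<And>d x. d \<in> space N \<Longrightarrow> is_cdf (E d x)"
   and Fm: "\<And>y. (\<lambda>x. F x y) \<in> borel_measurable Mx" and Fc: "\<And>x. is_cdf (F x)"
  shows "(\<lambda>(d, x). dev (E d x) (F x)) \<in> borel_measurable (N \<Otimes>\<^sub>M Mx)"
proof -
  have eq: "\<And>p. p \<in> space (N \<Otimes>\<^sub>M Mx) \<Longrightarrow>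
     (\<lambda>(d, x). dev (E d x) (F x)) p = (SUP r\<in>\<rat>. (E (fst p) (snd p) r - F (snd p) r)\<^sup>2)"
    using ec Fc dev_props(5) by (auto simp: space_pair_measure)
  have bd: "bdd_above ((\<lambda>r. (E (fst p) (snd p) r - F (snd p) r)\<^sup>2) ` \<rat>)"
    if "p \<in> space (N \<Otimes>\<^sub>M Mx)" for p
  proof -
    have "bdd_above (range (\<lambda>r. (E (fst p) (snd p) r - F (snd p) r)\<^sup>2))"
      using that by (intro dev_props(1) ec Fc) (auto simp: space_pair_measure)
    then show ?thesis by (rule bdd_above_mono) auto
  qed
  have mE: "(\<lambda>p. E (fst p) (snd p) r) \<in> borel_measurable (N \<Otimes>\<^sub>M Mx)" for r
  proof -
    have "(\<lambda>p. (fst p, snd p, r)) \<in> measurable (N \<Otimes>\<^sub>M Mx) (N \<Otimes>\<^sub>M Mx \<Otimes>\<^sub>M borel)"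
      by measurable
    from measurable_compose[OF this em] show ?thesis by simp
  qed
  have mF: "(\<lambda>p. F (snd p) r) \<in> borel_measurable (N \<Otimes>\<^sub>M Mx)" for r
    using measurable_compose[OF measurable_snd Fm] .
  have "(\<lambda>p. SUP r\<in>\<rat>. (E (fst p) (snd p) r - F (snd p) r)\<^sup>2) \<in> borel_measurable (N \<Otimes>\<^sub>M Mx)"
    by (rule borel_measurable_cSUP[OF countable_rat]) (use mE mF bd in auto)
  then show ?thesis by (subst measurable_cong[OF eq]) auto
qed

lemma markov_count:
  assumes M: "prob_space M" and fin: "finite I" and B: "\<And>i. i \<in> I \<Longrightarrow> B i \<in> sets M" and K: "0 < K"
  shows "measure M {\<omega>\<in>space M. K \<le> real (card {i\<in>I. \<omega> \<in> B i})} \<le> (\<Sum>i\<in>I. measure M (B i)) / K"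
proof -
  interpret prob_space M by (rule M)
  have eq: "real (card {i\<in>I. \<omega> \<in> B i}) = (\<Sum>i\<in>I. indicator (B i) \<omega>)" for \<omega>
  proof -
    have "(\<Sum>i\<in>I. indicator (B i) \<omega> :: real) = (\<Sum>i\<in>I. if \<omega> \<in> B i then 1 else 0)"
      by (intro sum.cong) auto
    also have "\<dots> = real (card (I \<inter> {i. \<omega> \<in> B i}))" using fin by (simp add: sum.If_cases)
    finally show ?thesis by (simp add: Collect_conj_eq Int_commute)
  qed
  have int: "integrable M (\<lambda>\<omega>. \<Sum>i\<in>I. indicator (B i) \<omega> :: real)"
    using B by (intro Bochner_Integration.integrable_sum) (auto intro!: integrable_real_indicator simp: less_top[symmetric] emeasure_finite)
  have "measure M {\<omega>\<in>space M. K \<le> (\<Sum>i\<in>I. indicator (B i) \<omega>)} \<le> (\<integral>\<omega>. (\<Sum>i\<in>I. indicator (B i) \<omega>) \<partial>M) / K"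
    by (rule integral_Markov_inequality_measure[OF int _ _ K, where A = "space M"])
       (auto intro!: sum_nonneg)
  also have "(\<integral>\<omega>. (\<Sum>i\<in>I. indicator (B i) \<omega>) \<partial>M) = (\<Sum>i\<in>I. measure M (B i))"
    using B by (subst Bochner_Integration.integral_sum) (auto intro!: integrable_real_indicator sum.cong simp: Int_absorb2 sets.sets_into_space less_top[symmetric] emeasure_finite)
  finally show ?thesis unfolding eq .
qed

lemma fubini_markov:
  fixes H :: "'d \<Rightarrow> 'd \<Rightarrow> real" and N :: "'d measure" and Mx :: "'d measure"
    and M :: "'m measure" and D :: "'m \<Rightarrow> 'd" and X :: "'m \<Rightarrow> 'd"
  assumes M: "prob_space M" and ind: "prob_space.indep_var M N D Mx X"
    and PX: "distr M Mx X = PX"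
    and Hm: "(\<lambda>(d, x). H d x) \<in> borel_measurable (N \<Otimes>\<^sub>M Mx)"
    and Hb: "\<And>d x. d \<in> space N \<Longrightarrow> x \<in> space Mx \<Longrightarrow> 0 \<le> H d x \<and> H d x \<le> 1"
    and c: "0 < c"
    and A: "measure M {\<omega>\<in>space M. \<eta> \<le> (\<integral>x. H (D \<omega>) x \<partial>PX)} \<le> \<rho>"
  shows "{\<omega>\<in>space M. c \<le> H (D \<omega>) (X \<omega>)} \<in> sets M"
    "measure M {\<omega>\<in>space M. c \<le> H (D \<omega>) (X \<omega>)} \<le> \<rho> + \<bar>\<eta>\<bar> / c"
proof -
  interpret prob_space M by (rule M)
  have Dm: "D \<in> measurable M N" and Xm: "X \<in> measurable M Mx"
    and prod: "distr M N D \<Otimes>\<^sub>M distr M Mx X = distr M (N \<Otimes>\<^sub>M Mx) (\<lambda>x. (D x, X x))"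
    using ind unfolding indep_var_distribution_eq by auto
  define ND where "ND = distr M N D"
  interpret ND: prob_space ND unfolding ND_def by (rule prob_space_distr[OF Dm])
  interpret PX: prob_space PX unfolding PX[symmetric] by (rule prob_space_distr[OF Xm])
  interpret PP: pair_prob_space ND PX by unfold_locales
  have sND: "sets ND = sets N" by (simp add: ND_def)
  have sPX: "sets PX = sets Mx" unfolding PX[symmetric] by simp
  have spPX: "space PX = space Mx" unfolding PX[symmetric] by simp
  have spND: "space ND = space N" by (simp add: ND_def)
  have sprod: "sets (ND \<Otimes>\<^sub>M PX) = sets (N \<Otimes>\<^sub>M Mx)" by (rule sets_pair_measure_cong[OF sND sPX])
  have Hm': "(\<lambda>(d, x). H d x) \<in> borel_measurable (ND \<Otimes>\<^sub>M PX)"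
    using Hm measurable_cong_sets[OF sprod refl] by blast
  define G where "G = (\<lambda>d. \<integral>x. H d x \<partial>PX)"
  have Gm: "G \<in> borel_measurable N"
    using PX.borel_measurable_lebesgue_integral[OF Hm'] measurable_cong_sets[OF sND refl]
    unfolding G_def by blast
  define k where "k = (\<lambda>p. indicator {d\<in>space N. G d < \<eta>} (fst p) * H (fst p) (snd p))"
  have km: "k \<in> borel_measurable (N \<Otimes>\<^sub>M Mx)"
  proof -
    have "{d\<in>space N. G d < \<eta>} \<in> sets N" using Gm by measurable
    then show ?thesis unfolding k_def using Hm by measurable
  qed
  have DXm: "(\<lambda>\<omega>. (D \<omega>, X \<omega>)) \<in> measurable M (N \<Otimes>\<^sub>M Mx)" using Dm Xm by measurable
  have HDX: "(\<lambda>\<omega>. H (D \<omega>) (X \<omega>)) \<in> borel_measurable M"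
    using measurable_compose[OF DXm Hm] by simp
  show Bm: "{\<omega>\<in>space M. c \<le> H (D \<omega>) (X \<omega>)} \<in> sets M" using HDX by measurable
  have Am: "{\<omega>\<in>space M. \<eta> \<le> G (D \<omega>)} \<in> sets M" using measurable_compose[OF Dm Gm] by measurable
  have kDX: "(\<lambda>\<omega>. k (D \<omega>, X \<omega>)) \<in> borel_measurable M" using measurable_compose[OF DXm km] by simp
  have kb: "\<And>p. p \<in> space (N \<Otimes>\<^sub>M Mx) \<Longrightarrow> 0 \<le> k p \<and> k p \<le> 1"
    using Hb by (auto simp: k_def space_pair_measure indicator_def)
  have Cm: "{\<omega>\<in>space M. c \<le> k (D \<omega>, X \<omega>)} \<in> sets M" using kDX by measurable
  have sub: "{\<omega>\<in>space M. c \<le> H (D \<omega>) (X \<omega>)} \<subseteq>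
      {\<omega>\<in>space M. \<eta> \<le> G (D \<omega>)} \<union> {\<omega>\<in>space M. c \<le> k (D \<omega>, X \<omega>)}"
  proof (intro subsetI)
    fix \<omega> assume \<omega>: "\<omega> \<in> {\<omega>\<in>space M. c \<le> H (D \<omega>) (X \<omega>)}"
    have "D \<omega> \<in> space N" using Dm \<omega> by (auto simp: measurable_def)
    then show "\<omega> \<in> {\<omega>\<in>space M. \<eta> \<le> G (D \<omega>)} \<union> {\<omega>\<in>space M. c \<le> k (D \<omega>, X \<omega>)}"
      using \<omega> by (cases "\<eta> \<le> G (D \<omega>)") (auto simp: k_def indicator_def)
  qed
  have intk: "integrable (ND \<Otimes>\<^sub>M PX) k"
  proof (rule PP.P.integrable_const_bound[where B = 1])
    show "AE x in ND \<Otimes>\<^sub>M PX. norm (k x) \<le> 1"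
      using kb by (auto simp: space_pair_measure spND spPX)
    show "k \<in> borel_measurable (ND \<Otimes>\<^sub>M PX)" using km measurable_cong_sets[OF sprod refl] by blast
  qed
  have "integral\<^sup>L M (\<lambda>\<omega>. k (D \<omega>, X \<omega>)) = integral\<^sup>L (distr M (N \<Otimes>\<^sub>M Mx) (\<lambda>\<omega>. (D \<omega>, X \<omega>))) k"
    by (rule integral_distr[symmetric, OF DXm km])
  also have "\<dots> = integral\<^sup>L (ND \<Otimes>\<^sub>M PX) k" using prod PX by (simp add: ND_def)
  also have "\<dots> = (\<integral>d. (\<integral>x. k (d, x) \<partial>PX) \<partial>ND)" by (rule PP.integral_fst'[OF intk, symmetric])
  also have "\<dots> \<le> (\<integral>d. \<bar>\<eta>\<bar> \<partial>ND)"
  proof (rule integral_mono)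
    show "integrable ND (\<lambda>d. \<integral>x. k (d, x) \<partial>PX)" by (rule PP.integrable_fst'[OF intk])
    fix d assume d: "d \<in> space ND"
    have "(\<integral>x. k (d, x) \<partial>PX) = indicator {d\<in>space N. G d < \<eta>} d * G d"
      by (simp add: k_def G_def)
    also have "\<dots> \<le> \<bar>\<eta>\<bar>" by (auto simp: indicator_def)
    finally show "(\<integral>x. k (d, x) \<partial>PX) \<le> \<bar>\<eta>\<bar>" .
  qed simp
  also have "\<dots> = \<bar>\<eta>\<bar>" by (simp add: ND.prob_space)
  finally have intle: "integral\<^sup>L M (\<lambda>\<omega>. k (D \<omega>, X \<omega>)) \<le> \<bar>\<eta>\<bar>" .
  have intkDX: "integrable M (\<lambda>\<omega>. k (D \<omega>, X \<omega>))"
  proof (rule integrable_const_bound[where B = 1])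
    show "AE x in M. norm (k (D x, X x)) \<le> 1"
    proof (rule AE_I2)
      fix x assume "x \<in> space M"
      then have "(D x, X x) \<in> space (N \<Otimes>\<^sub>M Mx)" using DXm by (auto simp: measurable_def)
      then show "norm (k (D x, X x)) \<le> 1" using kb by fastforce
    qed
  qed (rule kDX)
  have "measure M {\<omega>\<in>space M. c \<le> k (D \<omega>, X \<omega>)} \<le> integral\<^sup>L M (\<lambda>\<omega>. k (D \<omega>, X \<omega>)) / c"
    by (rule integral_Markov_inequality_measure[OF intkDX _ _ c, where A = "space M"])
       (use kb DXm in \<open>auto simp: measurable_def\<close>)
  also have "\<dots> \<le> \<bar>\<eta>\<bar> / c" using intle c by (simp add: divide_right_mono)
  finally have C: "measure M {\<omega>\<in>space M. c \<le> k (D \<omega>, X \<omega>)} \<le> \<bar>\<eta>\<bar> / c" .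
  have "measure M {\<omega>\<in>space M. c \<le> H (D \<omega>) (X \<omega>)} \<le>
      measure M ({\<omega>\<in>space M. \<eta> \<le> G (D \<omega>)} \<union> {\<omega>\<in>space M. c \<le> k (D \<omega>, X \<omega>)})"
    using sub Am Cm by (intro finite_measure_mono) auto
  also have "\<dots> \<le> measure M {\<omega>\<in>space M. \<eta> \<le> G (D \<omega>)} + measure M {\<omega>\<in>space M. c \<le> k (D \<omega>, X \<omega>)}"
    using Am Cm by (rule measure_Un_le)
  also have "\<dots> \<le> \<rho> + \<bar>\<eta>\<bar> / c" using A C by (simp add: G_def)
  finally show "measure M {\<omega>\<in>space M. c \<le> H (D \<omega>) (X \<omega>)} \<le> \<rho> + \<bar>\<eta>\<bar> / c" .
qed

lemma card_filter_sum:
  assumes "finite I"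
  shows "real (card {i\<in>I. P i}) = (\<Sum>i\<in>I. if P i then 1 else 0)"
proof -
  have "(\<Sum>i\<in>I. if P i then 1 else 0 :: real) = real (card (I \<inter> {i. P i}))"
    using assms by (simp add: sum.If_cases)
  then show ?thesis by (simp add: Collect_conj_eq Int_commute)
qed

lemma count_meas:
  assumes fin: "finite I" and B: "\<And>i. i \<in> I \<Longrightarrow> B i \<in> sets M"
  shows "(\<lambda>\<omega>. real (card {i\<in>I. \<omega> \<in> B i})) \<in> borel_measurable M"
proof -
  have "(\<lambda>\<omega>. \<Sum>i\<in>I. indicator (B i) \<omega> :: real) \<in> borel_measurable M"
    using B by (intro borel_measurable_sum) auto
  moreover have "\<And>\<omega>. real (card {i\<in>I. \<omega> \<in> B i}) = (\<Sum>i\<in>I. indicator (B i) \<omega>)"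
    by (subst card_filter_sum[OF fin]) (auto simp: indicator_def intro: sum.cong)
  ultimately show ?thesis by simp
qed

lemma measure_le_sets:
  assumes "finite_measure M" "S \<subseteq> T" "T \<in> sets M"
  shows "measure M S \<le> measure M T"
proof (cases "S \<in> sets M")
  case True then show ?thesis using assms by (intro finite_measure.finite_measure_mono) auto
next
  case False then show ?thesis by (simp add: measure_notin_sets)
qed

lemma hoeffding_count:
  fixes Z :: "nat + nat \<Rightarrow> 'm \<Rightarrow> 'z"
  assumes M: "prob_space M" and indep: "prob_space.indep_vars M (\<lambda>_. N) Z UNIV"
    and ident: "\<forall>k. distr M N (Z k) = distr M N (Z (Inl 0))"
    and S: "S \<in> sets N" and p: "measure (distr M N (Z (Inl 0))) S = v" and n: "1 \<le> n" and e: "0 \<le> e"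
  shows "{\<omega>\<in>space M. real (card {i\<in>{1..n}. Z (Inl i) \<omega> \<in> S}) / n \<le> v - e} \<in> sets M"
    "measure M {\<omega>\<in>space M. real (card {i\<in>{1..n}. Z (Inl i) \<omega> \<in> S}) / n \<le> v - e} \<le> exp (- 2 * real n * e\<^sup>2)"
    "{\<omega>\<in>space M. v + e \<le> real (card {i\<in>{1..n}. Z (Inl i) \<omega> \<in> S}) / n} \<in> sets M"
    "measure M {\<omega>\<in>space M. v + e \<le> real (card {i\<in>{1..n}. Z (Inl i) \<omega> \<in> S}) / n} \<le> exp (- 2 * real n * e\<^sup>2)"
proof -
  interpret prob_space M by (rule M)
  have Zm: "\<And>k. Z k \<in> measurable M N" using indep unfolding indep_vars_def by auto
  define I :: "(nat + nat) set" where "I = Inl ` {1..n}"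
  define X where "X = (\<lambda>k \<omega>. indicator S (Z k \<omega>) :: real)"
  define Y where "Y = (\<lambda>\<omega>. indicator S (Z (Inl 0) \<omega>) :: real)"
  have cardI: "card I = n" unfolding I_def by (subst card_image) (auto simp: inj_on_def)
  have sumeq: "(\<Sum>k\<in>I. X k \<omega>) = real (card {i\<in>{1..n}. Z (Inl i) \<omega> \<in> S})" for \<omega>
  proof -
    have "(\<Sum>k\<in>I. X k \<omega>) = (\<Sum>i\<in>{1..n}. indicator S (Z (Inl i) \<omega>))"
      unfolding I_def X_def by (subst sum.reindex) (auto simp: inj_on_def)
    also have "\<dots> = (\<Sum>i\<in>{1..n}. if Z (Inl i) \<omega> \<in> S then 1 else 0)"
      by (intro sum.cong) (auto simp: indicator_def)
    also have "\<dots> = real (card {i\<in>{1..n}. Z (Inl i) \<omega> \<in> S})"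
      by (rule card_filter_sum[symmetric]) simp
    finally show ?thesis .
  qed
  interpret H: Hoeffding_ineq_iid M I X Y 0 1 "expectation Y"
  proof unfold_locales
    show "finite I" by (simp add: I_def)
    show "indep_vars (\<lambda>_. borel) X I"
      unfolding X_def by (rule indep_vars_compose2[OF indep_vars_subset[OF indep]]) (use S in auto)
    show "\<And>i. i \<in> I \<Longrightarrow> distr M borel (X i) = distr M borel Y"
    proof -
      fix i
      have "distr M borel (X i) = distr (distr M N (Z i)) borel (indicator S)"
        unfolding X_def using S by (subst distr_distr) (auto simp: Zm comp_def)
      also have "\<dots> = distr (distr M N (Z (Inl 0))) borel (indicator S)" using ident by metis
      also have "\<dots> = distr M borel Y"
        unfolding Y_def using S by (subst distr_distr) (auto simp: Zm comp_def)
      finally show "distr M borel (X i) = distr M borel Y" .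
    qed
    show "random_variable borel Y" unfolding Y_def using S Zm by measurable
    show "AE x in M. Y x \<in> {0..1}" by (auto simp: Y_def indicator_def)
  qed
  have EY: "expectation Y = v"
  proof -
    have "expectation Y = (\<integral>z. indicator S z \<partial>distr M N (Z (Inl 0)))"
      unfolding Y_def using S by (subst integral_distr) (auto simp: Zm)
    also have "\<dots> = v" using p S by (simp add: sets.Int_space_eq2)
    finally show ?thesis .
  qed
  have Ine: "I \<noteq> {}" using n by (auto simp: I_def)
  have mX: "(\<lambda>\<omega>. real (card {i\<in>{1..n}. Z (Inl i) \<omega> \<in> S})) \<in> borel_measurable M"
  proof -
    have "(\<lambda>\<omega>. \<Sum>k\<in>I. X k \<omega>) \<in> borel_measurable M"
    proof (intro borel_measurable_sum)
      fix k show "X k \<in> borel_measurable M"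
        unfolding X_def by (rule measurable_compose[OF Zm borel_measurable_indicator[OF S]])
    qed
    moreover have "(\<lambda>\<omega>. \<Sum>k\<in>I. X k \<omega>) = (\<lambda>\<omega>. real (card {i\<in>{1..n}. Z (Inl i) \<omega> \<in> S}))"
      by (intro ext sumeq)
    ultimately show ?thesis by metis
  qed
  have mX' [measurable]: "(\<lambda>\<omega>. real (card {i\<in>{1..n}. Z (Inl i) \<omega> \<in> S}) / real n) \<in> borel_measurable M"
    by (rule borel_measurable_divide[OF mX borel_measurable_const])
  show "{\<omega>\<in>space M. real (card {i\<in>{1..n}. Z (Inl i) \<omega> \<in> S}) / n \<le> v - e} \<in> sets M"
    by measurable
  show "{\<omega>\<in>space M. v + e \<le> real (card {i\<in>{1..n}. Z (Inl i) \<omega> \<in> S}) / n} \<in> sets M"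
    by measurable
  have h1: "prob {x \<in> space M. (\<Sum>i\<in>I. X i x) / real (card I) \<le> expectation Y - e} \<le> exp (- 2 * real (card I) * e\<^sup>2 / (1 - 0)\<^sup>2)"
    by (rule H.Hoeffding_ineq_le'[OF e _ Ine]) simp
  have h2: "prob {x \<in> space M. expectation Y + e \<le> (\<Sum>i\<in>I. X i x) / real (card I)} \<le> exp (- 2 * real (card I) * e\<^sup>2 / (1 - 0)\<^sup>2)"
    by (rule H.Hoeffding_ineq_ge'[OF e _ Ine]) simp
  show "measure M {\<omega>\<in>space M. real (card {i\<in>{1..n}. Z (Inl i) \<omega> \<in> S}) / n \<le> v - e} \<le> exp (- 2 * real n * e\<^sup>2)"
    using h1 unfolding sumeq cardI EY by simp
  show "measure M {\<omega>\<in>space M. v + e \<le> real (card {i\<in>{1..n}. Z (Inl i) \<omega> \<in> S}) / n} \<le> exp (- 2 * real n * e\<^sup>2)"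
    using h2 unfolding sumeq cardI EY by simp
qed

lemma quantile_ok:
  fixes T U :: "nat \<Rightarrow> real" and bad :: "nat \<Rightarrow> bool"
  assumes n: "1 \<le> n" and c: "0 < c" and \<beta>: "0 < \<beta>" "\<beta> \<le> 1"
   and close: "\<And>i. i \<in> {1..n} \<Longrightarrow> \<not> bad i \<Longrightarrow> \<bar>T i - U i\<bar> < c/2"
   and nb: "real (card {i\<in>{1..n}. bad i}) < c * n / 4"
   and up: "(\<beta> + c/4) * n < real (card {i\<in>{1..n}. U i < \<beta> + c/2})"
   and lo: "real (card {i\<in>{1..n}. U i < \<beta> - c/2}) < (\<beta> - c/4) * n"
  shows "\<bar>emp_quantile \<beta> {1..n} T - \<beta>\<bar> \<le> c"
proof -
  have ne: "{1..n} \<noteq> {}" using n by auto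
  have cardn: "card {1..n} = n" by simp
  define B where "B = {i\<in>{1..n}. bad i}"
  have a: "emp_quantile \<beta> {1..n} T \<le> \<beta> + c"
  proof (rule ccontr)
    assume "\<not> ?thesis"
    then have q1: "real (card {i\<in>{1..n}. T i \<le> \<beta> + c}) < \<beta> * n"
      using emp_q_upper[OF _ ne \<beta>(1), of "\<beta> + c" T] by simp
    have sub1: "{i\<in>{1..n}. U i < \<beta> + c/2} \<subseteq> {i\<in>{1..n}. T i \<le> \<beta> + c} \<union> B"
    proof (intro subsetI)
      fix i assume i: "i \<in> {i\<in>{1..n}. U i < \<beta> + c/2}"
      show "i \<in> {i\<in>{1..n}. T i \<le> \<beta> + c} \<union> B"
      proof (cases "bad i")
        case False
        then have "\<bar>T i - U i\<bar> < c/2" using close i by auto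
        moreover have "T i - U i \<le> \<bar>T i - U i\<bar>" "- (T i - U i) \<le> \<bar>T i - U i\<bar>" by auto
        ultimately have "- (c/2) < T i - U i \<and> T i - U i < c/2" by linarith
        then show ?thesis using i by auto
      qed (use i in \<open>auto simp: B_def\<close>)
    qed
    then have c1: "card {i\<in>{1..n}. U i < \<beta> + c/2} \<le> card ({i\<in>{1..n}. T i \<le> \<beta> + c} \<union> B)"
      by (intro card_mono) (auto simp: B_def)
    have c2: "card ({i\<in>{1..n}. T i \<le> \<beta> + c} \<union> B) \<le> card {i\<in>{1..n}. T i \<le> \<beta> + c} + card B" by (rule card_Un_le)
    have c3: "real (card {i\<in>{1..n}. U i < \<beta> + c/2}) \<le> real (card {i\<in>{1..n}. T i \<le> \<beta> + c}) + real (card B)"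
      using c1 c2 by linarith
    have up': "\<beta> * n + c * n / 4 < real (card {i\<in>{1..n}. U i < \<beta> + c/2})"
      using up by (simp add: algebra_simps)
    have nb': "real (card B) < c * n / 4" using nb by (simp add: B_def)
    show False using q1 c3 up' nb' by linarith
  qed
  have b: "\<beta> - c \<le> emp_quantile \<beta> {1..n} T"
  proof (rule ccontr)
    assume "\<not> ?thesis"
    then have q1: "\<beta> * n \<le> real (card {i\<in>{1..n}. T i \<le> \<beta> - c})"
      using emp_q_lower[OF _ ne \<beta>(2), of T "\<beta> - c"] by simp
    have sub2: "{i\<in>{1..n}. T i \<le> \<beta> - c} \<subseteq> {i\<in>{1..n}. U i < \<beta> - c/2} \<union> B"
    proof (intro subsetI)
      fix i assume i: "i \<in> {i\<in>{1..n}. T i \<le> \<beta> - c}"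
      show "i \<in> {i\<in>{1..n}. U i < \<beta> - c/2} \<union> B"
      proof (cases "bad i")
        case False
        then have "\<bar>T i - U i\<bar> < c/2" using close i by auto
        moreover have "T i - U i \<le> \<bar>T i - U i\<bar>" "- (T i - U i) \<le> \<bar>T i - U i\<bar>" by auto
        ultimately have "- (c/2) < T i - U i \<and> T i - U i < c/2" by linarith
        then show ?thesis using i by auto
      qed (use i in \<open>auto simp: B_def\<close>)
    qed
    then have c1: "card {i\<in>{1..n}. T i \<le> \<beta> - c} \<le> card ({i\<in>{1..n}. U i < \<beta> - c/2} \<union> B)"
      by (intro card_mono) (auto simp: B_def)
    have c2: "card ({i\<in>{1..n}. U i < \<beta> - c/2} \<union> B) \<le> card {i\<in>{1..n}. U i < \<beta> - c/2} + card B" by (rule card_Un_le)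
    have c3: "real (card {i\<in>{1..n}. T i \<le> \<beta> - c}) \<le> real (card {i\<in>{1..n}. U i < \<beta> - c/2}) + real (card B)"
      using c1 c2 by linarith
    have lo': "real (card {i\<in>{1..n}. U i < \<beta> - c/2}) < \<beta> * n - c * n / 4"
      using lo by (simp add: algebra_simps)
    have nb': "real (card B) < c * n / 4" using nb by (simp add: B_def)
    show False using q1 c3 lo' nb' by linarith
  qed
  show ?thesis using a b by (simp add: abs_le_iff)
qed

theorem theorem2:
  fixes M :: "'m measure" and Mx :: "'a measure"
    and Z :: "nat + nat \<Rightarrow> 'm \<Rightarrow> 'a \<times> real"
    and F :: "'a \<Rightarrow> real \<Rightarrow> real"
    and est :: "nat \<Rightarrow> (nat \<Rightarrow> 'a \<times> real) \<Rightarrow> 'a \<Rightarrow> real \<Rightarrow> real"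
    and \<alpha> :: real and \<eta> \<rho> :: "nat \<Rightarrow> real" and Mb :: real
  assumes "prob_space M"
    and indep: "prob_space.indep_vars M (\<lambda>_. Mx \<Otimes>\<^sub>M borel) Z UNIV"
    and ident: "\<forall>k. distr M (Mx \<Otimes>\<^sub>M borel) (Z k) = distr M (Mx \<Otimes>\<^sub>M borel) (Z (Inl 0))"
    and condF: "cond_cdf (distr M (Mx \<Otimes>\<^sub>M borel) (Z (Inl 0))) Mx F"
    and est_meas: "\<forall>n. (\<lambda>(d, x, y). est n d x y)
         \<in> borel_measurable (PiM {1..n} (\<lambda>_. Mx \<Otimes>\<^sub>M borel) \<Otimes>\<^sub>M Mx \<Otimes>\<^sub>M borel)"
    and est_cdf: "\<forall>n. \<forall>d\<in>space (PiM {1..n} (\<lambda>_. Mx \<Otimes>\<^sub>M borel)). \<forall>x. is_cdf (est n d x)"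
    and alpha: "0 < \<alpha>" "\<alpha> < 1"
    and A1: "\<eta> \<longlonglongrightarrow> 0" "\<rho> \<longlonglongrightarrow> 0"
      "\<forall>n. measure M {\<omega>\<in>space M. \<eta> n \<le>
          (\<integral>x. (SUP y. (est n (\<lambda>i\<in>{1..n}. Z (Inr i) \<omega>) x y - F x y)\<^sup>2)
             \<partial>(distr M Mx (\<lambda>\<omega>. fst (Z (Inl 0) \<omega>))))} \<le> \<rho> n"
    and A2: "\<forall>x y. F x differentiable at y" "0 < Mb"
      "\<exists>\<delta>>0. \<forall>x y. (\<bar>y - ginv (F x) (\<alpha>/2)\<bar> < \<delta> \<or> \<bar>y - ginv (F x) (1 - \<alpha>/2)\<bar> < \<delta>)
                    \<longrightarrow> 1 / Mb \<le> deriv (F x) y"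
  shows "\<forall>\<epsilon>>0. (\<lambda>n. measure M {\<omega>\<in>space M. \<epsilon> <
     measure lborel (symdiff
       {ginv (est n (\<lambda>i\<in>{1..n}. Z (Inr i) \<omega>) (fst (Z (Inl (n+1)) \<omega>)))
              (emp_quantile (\<alpha>/2) {1..n}
                 (\<lambda>i. est n (\<lambda>i\<in>{1..n}. Z (Inr i) \<omega>) (fst (Z (Inl i) \<omega>)) (snd (Z (Inl i) \<omega>))))
        ..
        ginv (est n (\<lambda>i\<in>{1..n}. Z (Inr i) \<omega>) (fst (Z (Inl (n+1)) \<omega>)))
              (emp_quantile (1 - \<alpha>/2) {1..n}
                 (\<lambda>i. est n (\<lambda>i\<in>{1..n}. Z (Inr i) \<omega>) (fst (Z (Inl i) \<omega>)) (snd (Z (Inl i) \<omega>))))}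
       {ginv (F (fst (Z (Inl (n+1)) \<omega>))) (\<alpha>/2) .. ginv (F (fst (Z (Inl (n+1)) \<omega>))) (1 - \<alpha>/2)})})
     \<longlonglongrightarrow> 0"
proof (intro allI impI)
  fix \<epsilon> :: real assume \<epsilon>: "0 < \<epsilon>"
  note Mps = assms(1)
  interpret prob_space M by (rule Mps)
  have Zm: "\<And>k. Z k \<in> measurable M (Mx \<Otimes>\<^sub>M borel)" using indep unfolding indep_vars_def by auto
  have Zsp: "\<And>k \<omega>. \<omega> \<in> space M \<Longrightarrow> Z k \<omega> \<in> space (Mx \<Otimes>\<^sub>M borel)"
    using Zm by (auto simp: measurable_def)
  define Pz where "Pz = distr M (Mx \<Otimes>\<^sub>M borel) (Z (Inl 0))"
  define PX where "PX = distr M Mx (\<lambda>\<omega>. fst (Z (Inl 0) \<omega>))"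
  have Pzp: "prob_space Pz" unfolding Pz_def by (rule prob_space_distr[OF Zm])
  have sPz: "sets Pz = sets (Mx \<Otimes>\<^sub>M borel)" by (simp add: Pz_def)
  have spPz: "space Pz = space (Mx \<Otimes>\<^sub>M borel)" by (simp add: Pz_def)
  have condF': "cond_cdf Pz Mx F" using condF by (simp add: Pz_def)
  have Fm: "\<And>y. (\<lambda>x. F x y) \<in> borel_measurable Mx" and cdfF: "\<And>x. is_cdf (F x)"
    using condF by (auto simp: cond_cdf_def)
  have contF: "\<And>x y. isCont (F x) y" using A2(1) differentiable_imp_continuous_within by blast
  have monoF: "\<And>x. mono (F x)" using cdfF by (auto simp: is_cdf_def)
  obtain \<delta> where \<delta>: "\<delta> > 0" and der: "\<And>x y. \<bar>y - ginv (F x) (\<alpha>/2)\<bar> < \<delta> \<or> \<bar>y - ginv (F x) (1 - \<alpha>/2)\<bar> < \<delta>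
       \<Longrightarrow> 1 / Mb \<le> deriv (F x) y"
    using A2(3) by blast
  define h where "h = min (\<epsilon>/4) (\<delta>/2)"
  define c where "c = min (h / (2 * Mb)) (\<alpha>/4)"
  have h: "0 < h" "h < \<delta>" "2 * h < \<epsilon>" using \<epsilon> \<delta> by (auto simp: h_def)
  have Mb: "0 < Mb" by (rule A2(2))
  have c: "0 < c" "c \<le> h / (2 * Mb)" "c \<le> \<alpha>/4" using h Mb alpha by (auto simp: c_def)
  have XD: "\<And>k. distr M Mx (\<lambda>\<omega>. fst (Z k \<omega>)) = PX"
  proof -
    fix k
    have "distr M Mx (\<lambda>\<omega>. fst (Z k \<omega>)) = distr (distr M (Mx \<Otimes>\<^sub>M borel) (Z k)) Mx fst"
      by (subst distr_distr) (auto simp: Zm comp_def)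
    also have "\<dots> = distr (distr M (Mx \<Otimes>\<^sub>M borel) (Z (Inl 0))) Mx fst" using ident by metis
    also have "\<dots> = PX" unfolding PX_def by (subst distr_distr) (auto simp: Zm comp_def)
    finally show "distr M Mx (\<lambda>\<omega>. fst (Z k \<omega>)) = PX" .
  qed
  define Dn where "Dn = (\<lambda>n \<omega>. \<lambda>i\<in>{1..n}. Z (Inr i) \<omega>)"
  define Hn where "Hn = (\<lambda>n d x. dev (est n d x) (F x))"
  define NS :: "nat \<Rightarrow> (nat \<Rightarrow> 'a \<times> real) measure" where "NS = (\<lambda>n::nat. PiM {1..n} (\<lambda>_. Mx \<Otimes>\<^sub>M borel))"
  have Dsp: "\<And>n \<omega>. \<omega> \<in> space M \<Longrightarrow> Dn n \<omega> \<in> space (NS n)"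
    using Zsp by (auto simp: Dn_def NS_def space_PiM)
  have estc: "\<And>n d x. d \<in> space (NS n) \<Longrightarrow> is_cdf (est n d x)"
    using est_cdf by (auto simp: NS_def)
  have Hb: "\<And>n d x. d \<in> space (NS n) \<Longrightarrow> 0 \<le> Hn n d x \<and> Hn n d x \<le> 1"
    using estc cdfF dev_props(3,4) by (auto simp: Hn_def)
  have Hle: "\<And>n d x y. d \<in> space (NS n) \<Longrightarrow> (est n d x y - F x y)\<^sup>2 \<le> Hn n d x"
    using estc cdfF dev_props(2) by (auto simp: Hn_def)
  have Hmeas: "\<And>n. (\<lambda>(d, x). Hn n d x) \<in> borel_measurable (NS n \<Otimes>\<^sub>M Mx)"
    unfolding Hn_def NS_def by (rule dev_meas[OF est_meas[rule_format] _ Fm cdfF]) (use est_cdf in auto)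
  have Hsec: "\<And>n d. d \<in> space (NS n) \<Longrightarrow> (\<lambda>x. Hn n d x) \<in> borel_measurable Mx"
    using measurable_Pair2[OF Hmeas] by simp

  have P1: "{\<omega>\<in>space M. c' \<le> Hn n (Dn n \<omega>) (fst (Z (Inl i) \<omega>))} \<in> sets M \<and>
     measure M {\<omega>\<in>space M. c' \<le> Hn n (Dn n \<omega>) (fst (Z (Inl i) \<omega>))} \<le> \<rho> n + \<bar>\<eta> n\<bar> / c'"
    if c': "0 < c'" for n i c'
  proof -
    define A :: "(nat + nat) set" where "A = Inr ` {1..n}"
    define B :: "(nat + nat) set" where "B = {Inl i}"
    define D where "D = (\<lambda>\<omega>. restrict (\<lambda>k. Z k \<omega>) A)"
    define X where "X = (\<lambda>\<omega>. restrict (\<lambda>k. Z k \<omega>) B)"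
    have ind2: "indep_var (PiM A (\<lambda>_. Mx \<Otimes>\<^sub>M (borel :: real measure))) D (PiM B (\<lambda>_. Mx \<Otimes>\<^sub>M (borel :: real measure))) X"
      unfolding D_def X_def by (rule indep_var_restrict[OF indep]) (auto simp: A_def B_def)
    define H' :: "(nat + nat \<Rightarrow> 'a \<times> real) \<Rightarrow> (nat + nat \<Rightarrow> 'a \<times> real) \<Rightarrow> real" where "H' = (\<lambda>d x. Hn n (\<lambda>j\<in>{1..n}. d (Inr j)) (fst (x (Inl i))))"
    define PX' where "PX' = distr M (PiM B (\<lambda>_. Mx \<Otimes>\<^sub>M (borel :: real measure))) X"
    have g: "(\<lambda>p. ((\<lambda>j\<in>{1..n}. fst p (Inr j)), fst (snd p (Inl i)))) \<in>
        measurable (PiM A (\<lambda>_. Mx \<Otimes>\<^sub>M (borel :: real measure)) \<Otimes>\<^sub>M PiM B (\<lambda>_. Mx \<Otimes>\<^sub>M (borel :: real measure))) (NS n \<Otimes>\<^sub>M Mx)"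
      unfolding NS_def by (auto simp: A_def B_def intro!: measurable_Pair measurable_restrict
          measurable_compose[OF measurable_fst measurable_component_singleton]
          measurable_compose[OF measurable_snd measurable_component_singleton]
          measurable_compose[OF _ measurable_fst])
    have Hm': "(\<lambda>(d, x). H' d x) \<in> borel_measurable (PiM A (\<lambda>_. Mx \<Otimes>\<^sub>M (borel :: real measure)) \<Otimes>\<^sub>M PiM B (\<lambda>_. Mx \<Otimes>\<^sub>M (borel :: real measure)))"
    proof -
      have "(\<lambda>p. (\<lambda>(d, x). Hn n d x) ((\<lambda>j\<in>{1..n}. fst p (Inr j)), fst (snd p (Inl i)))) \<in> borel_measurable (PiM A (\<lambda>_. Mx \<Otimes>\<^sub>M (borel :: real measure)) \<Otimes>\<^sub>M PiM B (\<lambda>_. Mx \<Otimes>\<^sub>M (borel :: real measure)))"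
        by (rule measurable_compose[OF g Hmeas])
      moreover have "(\<lambda>(d, x). H' d x) = (\<lambda>p. (\<lambda>(d, x). Hn n d x) ((\<lambda>j\<in>{1..n}. fst p (Inr j)), fst (snd p (Inl i))))"
        by (auto simp: H'_def fun_eq_iff)
      ultimately show ?thesis by simp
    qed
    have rsp: "(\<lambda>j\<in>{1..n}. d (Inr j)) \<in> space (NS n)" if "d \<in> space (PiM A (\<lambda>_. Mx \<Otimes>\<^sub>M (borel :: real measure)))" for d
      using that by (auto simp: NS_def space_PiM A_def PiE_iff)
    have Hb': "\<And>d x. d \<in> space (PiM A (\<lambda>_. Mx \<Otimes>\<^sub>M (borel :: real measure))) \<Longrightarrow> x \<in> space (PiM B (\<lambda>_. Mx \<Otimes>\<^sub>M (borel :: real measure))) \<Longrightarrow> 0 \<le> H' d x \<and> H' d x \<le> 1"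
      unfolding H'_def using rsp Hb by blast
    have Deq: "\<And>\<omega>. (\<lambda>j\<in>{1..n}. D \<omega> (Inr j)) = Dn n \<omega>"
      by (auto simp: D_def Dn_def A_def fun_eq_iff)
    have Xeq: "\<And>\<omega>. X \<omega> (Inl i) = Z (Inl i) \<omega>" by (simp add: X_def B_def)
    have Xm: "X \<in> measurable M (PiM B (\<lambda>_. Mx \<Otimes>\<^sub>M (borel :: real measure)))"
      unfolding X_def using Zm by (auto intro!: measurable_restrict)
    have inteq: "(\<integral>x. H' (D \<omega>) x \<partial>PX') = (\<integral>x. Hn n (Dn n \<omega>) x \<partial>PX)" if \<omega>: "\<omega> \<in> space M" for \<omega>
    proof -
      have f: "(\<lambda>x. Hn n (Dn n \<omega>) x) \<in> borel_measurable Mx" by (rule Hsec[OF Dsp[OF \<omega>]])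
      have fB: "(\<lambda>x. Hn n (Dn n \<omega>) (fst (x (Inl i)))) \<in> borel_measurable (PiM B (\<lambda>_. Mx \<Otimes>\<^sub>M (borel :: real measure)))"
      proof (rule measurable_compose[OF _ f])
        have "(\<lambda>x. x (Inl i)) \<in> measurable (PiM B (\<lambda>_. Mx \<Otimes>\<^sub>M (borel :: real measure))) (Mx \<Otimes>\<^sub>M (borel :: real measure))"
          by (rule measurable_component_singleton) (simp add: B_def)
        from measurable_compose[OF this measurable_fst]
        show "(\<lambda>x. fst (x (Inl i))) \<in> measurable (PiM B (\<lambda>_. Mx \<Otimes>\<^sub>M (borel :: real measure))) Mx" .
      qed
      have "(\<integral>x. H' (D \<omega>) x \<partial>PX') = (\<integral>x. Hn n (Dn n \<omega>) (fst (x (Inl i))) \<partial>PX')"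
        by (simp only: H'_def Deq)
      also have "\<dots> = (\<integral>\<omega>'. Hn n (Dn n \<omega>) (fst (X \<omega>' (Inl i))) \<partial>M)"
        unfolding PX'_def by (rule integral_distr[OF Xm fB])
      also have "\<dots> = (\<integral>\<omega>'. Hn n (Dn n \<omega>) (fst (Z (Inl i) \<omega>')) \<partial>M)" by (simp add: Xeq)
      also have "\<dots> = (\<integral>x. Hn n (Dn n \<omega>) x \<partial>distr M Mx (\<lambda>\<omega>'. fst (Z (Inl i) \<omega>')))"
        by (rule integral_distr[symmetric]) (use Zm f in auto)
      also have "\<dots> = (\<integral>x. Hn n (Dn n \<omega>) x \<partial>PX)" by (simp add: XD)
      finally show ?thesis .
    qed
    have A': "measure M {\<omega>\<in>space M. \<eta> n \<le> (\<integral>x. H' (D \<omega>) x \<partial>PX')} \<le> \<rho> n"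
    proof -
      have "{\<omega>\<in>space M. \<eta> n \<le> (\<integral>x. H' (D \<omega>) x \<partial>PX')} =
         {\<omega>\<in>space M. \<eta> n \<le> (\<integral>x. (SUP y. (est n (\<lambda>i\<in>{1..n}. Z (Inr i) \<omega>) x y - F x y)\<^sup>2)
             \<partial>(distr M Mx (\<lambda>\<omega>. fst (Z (Inl 0) \<omega>))))}"
        using inteq by (auto simp: Hn_def dev_def Dn_def PX_def)
      then show ?thesis using A1(3) by simp
    qed
    note FM = fubini_markov[OF Mps ind2 PX'_def[symmetric] Hm' Hb' c' A']
    have seteq: "{\<omega>\<in>space M. c' \<le> H' (D \<omega>) (X \<omega>)} = {\<omega>\<in>space M. c' \<le> Hn n (Dn n \<omega>) (fst (Z (Inl i) \<omega>))}"
      by (simp only: H'_def Deq Xeq)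
    show ?thesis using FM unfolding seteq by simp
  qed

  define Sv where "Sv = (\<lambda>v. {z\<in>space (Mx \<Otimes>\<^sub>M borel). F (fst z) (snd z) < v})"
  have Svp: "Sv v \<in> sets (Mx \<Otimes>\<^sub>M borel) \<and> measure (distr M (Mx \<Otimes>\<^sub>M borel) (Z (Inl 0))) (Sv v) = v"
    if "0 < v" "v < 1" for v
    using pit[OF Pzp sPz condF' contF that] sPz spPz by (simp add: Sv_def Pz_def)
  note HC = hoeffding_count[OF Mps indep ident]

  define C where "C = (\<lambda>n. {\<omega>\<in>space M. c\<^sup>2 \<le> Hn n (Dn n \<omega>) (fst (Z (Inl (n+1)) \<omega>))})"
  define Bi where "Bi = (\<lambda>n i. {\<omega>\<in>space M. (c/2)\<^sup>2 \<le> Hn n (Dn n \<omega>) (fst (Z (Inl i) \<omega>))})"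
  define K where "K = (\<lambda>n. {\<omega>\<in>space M. c * n / 4 \<le> real (card {i\<in>{1..n}. \<omega> \<in> Bi n i})})"
  define L where "L = (\<lambda>n \<beta>. {\<omega>\<in>space M. real (card {i\<in>{1..n}. Z (Inl i) \<omega> \<in> Sv (\<beta> + c/2)}) / n \<le> (\<beta> + c/2) - c/4})"
  define U where "U = (\<lambda>n \<beta>. {\<omega>\<in>space M. (\<beta> - c/2) + c/4 \<le> real (card {i\<in>{1..n}. Z (Inl i) \<omega> \<in> Sv (\<beta> - c/2)}) / n})"
  have c2: "0 < c\<^sup>2" "0 < (c/2)\<^sup>2" using c by auto
  have Cm: "C n \<in> sets M" "measure M (C n) \<le> \<rho> n + \<bar>\<eta> n\<bar> / c\<^sup>2" for n
    using P1[OF c2(1)] by (auto simp: C_def)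
  have Bm: "Bi n i \<in> sets M" "measure M (Bi n i) \<le> \<rho> n + \<bar>\<eta> n\<bar> / (c/2)\<^sup>2" for n i
    using P1[OF c2(2)] by (auto simp: Bi_def)
  have Km: "K n \<in> sets M" if n: "1 \<le> n" for n
    unfolding K_def using count_meas[of "{1..n}" "Bi n" M] Bm by measurable
  have Kle: "measure M (K n) \<le> 4 / c * (\<rho> n + \<bar>\<eta> n\<bar> / (c/2)\<^sup>2)" if n: "1 \<le> n" for n
  proof -
    have "measure M (K n) \<le> (\<Sum>i\<in>{1..n}. measure M (Bi n i)) / (c * n / 4)"
      unfolding K_def by (rule markov_count[OF Mps]) (use Bm c n in auto)
    also have "\<dots> \<le> (\<Sum>i\<in>{1..n}. \<rho> n + \<bar>\<eta> n\<bar> / (c/2)\<^sup>2) / (c * n / 4)"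
      using c n by (intro divide_right_mono sum_mono Bm) auto
    also have "\<dots> = 4 / c * (\<rho> n + \<bar>\<eta> n\<bar> / (c/2)\<^sup>2)" using c n by (simp add: field_simps)
    finally show ?thesis .
  qed
  have \<beta>props: "0 < \<beta> - c/2" "\<beta> + c/2 < 1" "0 < \<beta>" "\<beta> < 1" if "\<beta> \<in> {\<alpha>/2, 1 - \<alpha>/2}" for \<beta>
    using that c alpha by auto
  have LU: "L n \<beta> \<in> sets M" "measure M (L n \<beta>) \<le> exp (- 2 * real n * (c/4)\<^sup>2)"
     "U n \<beta> \<in> sets M" "measure M (U n \<beta>) \<le> exp (- 2 * real n * (c/4)\<^sup>2)"
    if n: "1 \<le> n" and \<beta>: "\<beta> \<in> {\<alpha>/2, 1 - \<alpha>/2}" for n \<beta>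
  proof -
    have v1: "0 < \<beta> + c/2" "\<beta> + c/2 < 1" and v2: "0 < \<beta> - c/2" "\<beta> - c/2 < 1"
      using \<beta>props[OF \<beta>] c by auto
    have e: "0 \<le> c/4" using c by simp
    note S1 = Svp[OF v1] and S2 = Svp[OF v2]
    note H1 = HC[OF conjunct1[OF S1] conjunct2[OF S1] n e] and H2 = HC[OF conjunct1[OF S2] conjunct2[OF S2] n e]
    show "L n \<beta> \<in> sets M" unfolding L_def by (rule H1(1))
    show "measure M (L n \<beta>) \<le> exp (- 2 * real n * (c/4)\<^sup>2)" unfolding L_def by (rule H1(2))
    show "U n \<beta> \<in> sets M" unfolding U_def by (rule H2(3))
    show "measure M (U n \<beta>) \<le> exp (- 2 * real n * (c/4)\<^sup>2)" unfolding U_def by (rule H2(4))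
  qed

  have key: "\<bar>ginv (est n (Dn n \<omega>) (fst (Z (Inl (n+1)) \<omega>)))
              (emp_quantile \<beta> {1..n}
                 (\<lambda>i. est n (Dn n \<omega>) (fst (Z (Inl i) \<omega>)) (snd (Z (Inl i) \<omega>))))
        - ginv (F (fst (Z (Inl (n+1)) \<omega>))) \<beta>\<bar> \<le> h"
    if n: "1 \<le> n" and \<omega>: "\<omega> \<in> space M" and \<beta>: "\<beta> \<in> {\<alpha>/2, 1 - \<alpha>/2}"
      and nC: "\<omega> \<notin> C n" and nK: "\<omega> \<notin> K n" and nL: "\<omega> \<notin> L n \<beta>" and nU: "\<omega> \<notin> U n \<beta>" for n \<omega> \<beta>
  proof -
    define d where "d = Dn n \<omega>"
    have d: "d \<in> space (NS n)" unfolding d_def by (rule Dsp[OF \<omega>])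
    define T where "T = (\<lambda>i. est n d (fst (Z (Inl i) \<omega>)) (snd (Z (Inl i) \<omega>)))"
    define Uf where "Uf = (\<lambda>i. F (fst (Z (Inl i) \<omega>)) (snd (Z (Inl i) \<omega>)))"
    define bad where "bad = (\<lambda>i. (c/2)\<^sup>2 \<le> Hn n d (fst (Z (Inl i) \<omega>)))"
    have inSv: "\<And>i v. Z (Inl i) \<omega> \<in> Sv v \<longleftrightarrow> Uf i < v" using Zsp[OF \<omega>] by (simp add: Sv_def Uf_def)
    have q: "\<bar>emp_quantile \<beta> {1..n} T - \<beta>\<bar> \<le> c"
    proof (rule quantile_ok[OF n c(1), where U = Uf and bad = bad])
      show "0 < \<beta>" "\<beta> \<le> 1" using \<beta>props[OF \<beta>] by auto
      show "\<bar>T i - Uf i\<bar> < c/2" if "i \<in> {1..n}" "\<not> bad i" for i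
      proof -
        have "(T i - Uf i)\<^sup>2 < (c/2)\<^sup>2"
          using Hle[OF d, of "fst (Z (Inl i) \<omega>)" "snd (Z (Inl i) \<omega>)"] that(2)
          by (simp add: T_def Uf_def bad_def)
        then have "\<bar>T i - Uf i\<bar>\<^sup>2 < (c/2)\<^sup>2" by simp
        then show ?thesis by (rule power2_less_imp_less) (use c in simp)
      qed
      have "{i\<in>{1..n}. bad i} = {i\<in>{1..n}. \<omega> \<in> Bi n i}" using \<omega> by (auto simp: bad_def Bi_def d_def)
      then show "real (card {i\<in>{1..n}. bad i}) < c * n / 4" using nK \<omega> by (auto simp: K_def)
      have "\<not> real (card {i\<in>{1..n}. Uf i < \<beta> + c/2}) / n \<le> \<beta> + c/2 - c/4"
        using nL \<omega> by (simp add: L_def inSv)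
      then show "(\<beta> + c/4) * n < real (card {i\<in>{1..n}. Uf i < \<beta> + c/2})"
        using n by (simp add: field_simps)
      have "\<not> \<beta> - c/2 + c/4 \<le> real (card {i\<in>{1..n}. Uf i < \<beta> - c/2}) / n"
        using nU \<omega> by (simp add: U_def inSv)
      then show "real (card {i\<in>{1..n}. Uf i < \<beta> - c/2}) < (\<beta> - c/4) * n"
        using n by (simp add: field_simps)
    qed
    define x where "x = fst (Z (Inl (n+1)) \<omega>)"
    define qq where "qq = ginv (F x) \<beta>"
    have Fq: "F x qq = \<beta>" unfolding qq_def by (rule ginv_cont[OF cdfF _ _ contF]) (use \<beta>props[OF \<beta>] in auto)
    have derq: "\<And>y. \<bar>y - qq\<bar> < \<delta> \<Longrightarrow> 1 / Mb \<le> deriv (F x) y"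
      using der \<beta> by (auto simp: qq_def)
    have mv: "F x qq + h / Mb \<le> F x (qq + h)" "F x (qq - h) \<le> F x qq - h / Mb"
      using mvt_lb[of "F x" qq \<delta> Mb h, OF _ derq] A2(1) h by auto
    have Hx: "Hn n d x < c\<^sup>2" using nC \<omega> by (simp add: C_def d_def x_def)
    have err: "\<bar>est n d x y - F x y\<bar> \<le> sqrt (Hn n d x)" for y
    proof -
      have "\<bar>est n d x y - F x y\<bar> = sqrt ((est n d x y - F x y)\<^sup>2)" by simp
      also have "\<dots> \<le> sqrt (Hn n d x)" by (rule real_sqrt_le_mono[OF Hle[OF d]])
      finally show ?thesis .
    qed
    have sq: "sqrt (Hn n d x) < c"
    proof -
      have "sqrt (Hn n d x) < sqrt (c\<^sup>2)" using Hx Hb[OF d, of x] by (intro real_sqrt_less_mono) 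
      then show ?thesis using c by simp
    qed
    have small: "\<bar>emp_quantile \<beta> {1..n} T - \<beta>\<bar> + sqrt (Hn n d x) < h / Mb"
    proof -
      have "h / (2 * Mb) + h / (2 * Mb) = h / Mb" using Mb by (simp add: field_simps)
      then show ?thesis using q sq c by linarith
    qed
    have "\<bar>ginv (est n d x) (emp_quantile \<beta> {1..n} T) - qq\<bar> \<le> h"
      by (rule ginv_close[OF monoF Fq _ _ err small]) (use mv Fq in auto)
    then show ?thesis by (simp add: d_def T_def x_def qq_def)
  qed

  define bound where "bound = (\<lambda>n. (\<rho> n + \<bar>\<eta> n\<bar> / c\<^sup>2) + 4 / c * (\<rho> n + \<bar>\<eta> n\<bar> / (c/2)\<^sup>2)
      + 4 * exp (- 2 * real n * (c/4)\<^sup>2))"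
  define Bad where "Bad = (\<lambda>n. C n \<union> K n \<union> L n (\<alpha>/2) \<union> U n (\<alpha>/2) \<union> L n (1 - \<alpha>/2) \<union> U n (1 - \<alpha>/2))"
  have b12: "\<alpha>/2 \<in> {\<alpha>/2, 1 - \<alpha>/2}" "1 - \<alpha>/2 \<in> {\<alpha>/2, 1 - \<alpha>/2}" by auto
  have Badm: "Bad n \<in> sets M" if "1 \<le> n" for n
    unfolding Bad_def using Cm Km[OF that] LU[OF that b12(1)] LU[OF that b12(2)] by auto
  have Badle: "measure M (Bad n) \<le> bound n" if n: "1 \<le> n" for n
  proof -
    note l1 = LU[OF n b12(1)] and l2 = LU[OF n b12(2)]
    have "measure M (Bad n) \<le> measure M (C n) + measure M (K n) + measure M (L n (\<alpha>/2)) + measure M (U n (\<alpha>/2))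
        + measure M (L n (1 - \<alpha>/2)) + measure M (U n (1 - \<alpha>/2))"
      unfolding Bad_def using Cm(1) Km[OF n] l1(1,3) l2(1,3)
      by (intro order.trans[OF measure_Un_le] add_mono order.refl; simp)+
    also have "\<dots> \<le> bound n"
      using Cm(2)[of n] Kle[OF n] l1(2,4) l2(2,4) by (simp add: bound_def)
    finally show ?thesis .
  qed
  show "(\<lambda>n. measure M {\<omega>\<in>space M. \<epsilon> <
     measure lborel (symdiff
       {ginv (est n (\<lambda>i\<in>{1..n}. Z (Inr i) \<omega>) (fst (Z (Inl (n+1)) \<omega>)))
              (emp_quantile (\<alpha>/2) {1..n}
                 (\<lambda>i. est n (\<lambda>i\<in>{1..n}. Z (Inr i) \<omega>) (fst (Z (Inl i) \<omega>)) (snd (Z (Inl i) \<omega>))))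
        ..
        ginv (est n (\<lambda>i\<in>{1..n}. Z (Inr i) \<omega>) (fst (Z (Inl (n+1)) \<omega>)))
              (emp_quantile (1 - \<alpha>/2) {1..n}
                 (\<lambda>i. est n (\<lambda>i\<in>{1..n}. Z (Inr i) \<omega>) (fst (Z (Inl i) \<omega>)) (snd (Z (Inl i) \<omega>))))}
       {ginv (F (fst (Z (Inl (n+1)) \<omega>))) (\<alpha>/2) .. ginv (F (fst (Z (Inl (n+1)) \<omega>))) (1 - \<alpha>/2)})})
     \<longlonglongrightarrow> 0"
  proof (rule Lim_null_comparison[where g = bound])
    show "eventually (\<lambda>n. norm (measure M {\<omega>\<in>space M. \<epsilon> <
     measure lborel (symdiff
       {ginv (est n (\<lambda>i\<in>{1..n}. Z (Inr i) \<omega>) (fst (Z (Inl (n+1)) \<omega>)))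
              (emp_quantile (\<alpha>/2) {1..n}
                 (\<lambda>i. est n (\<lambda>i\<in>{1..n}. Z (Inr i) \<omega>) (fst (Z (Inl i) \<omega>)) (snd (Z (Inl i) \<omega>))))
        ..
        ginv (est n (\<lambda>i\<in>{1..n}. Z (Inr i) \<omega>) (fst (Z (Inl (n+1)) \<omega>)))
              (emp_quantile (1 - \<alpha>/2) {1..n}
                 (\<lambda>i. est n (\<lambda>i\<in>{1..n}. Z (Inr i) \<omega>) (fst (Z (Inl i) \<omega>)) (snd (Z (Inl i) \<omega>))))}
       {ginv (F (fst (Z (Inl (n+1)) \<omega>))) (\<alpha>/2) .. ginv (F (fst (Z (Inl (n+1)) \<omega>))) (1 - \<alpha>/2)})}) \<le> bound n) sequentially"
      using eventually_ge_at_top[of 1]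
    proof eventually_elim
      case (elim n)
      have sub: "{\<omega>\<in>space M. \<epsilon> <
     measure lborel (symdiff
       {ginv (est n (\<lambda>i\<in>{1..n}. Z (Inr i) \<omega>) (fst (Z (Inl (n+1)) \<omega>)))
              (emp_quantile (\<alpha>/2) {1..n}
                 (\<lambda>i. est n (\<lambda>i\<in>{1..n}. Z (Inr i) \<omega>) (fst (Z (Inl i) \<omega>)) (snd (Z (Inl i) \<omega>))))
        ..
        ginv (est n (\<lambda>i\<in>{1..n}. Z (Inr i) \<omega>) (fst (Z (Inl (n+1)) \<omega>)))
              (emp_quantile (1 - \<alpha>/2) {1..n}
                 (\<lambda>i. est n (\<lambda>i\<in>{1..n}. Z (Inr i) \<omega>) (fst (Z (Inl i) \<omega>)) (snd (Z (Inl i) \<omega>))))}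
       {ginv (F (fst (Z (Inl (n+1)) \<omega>))) (\<alpha>/2) .. ginv (F (fst (Z (Inl (n+1)) \<omega>))) (1 - \<alpha>/2)})} \<subseteq> Bad n"
      proof (intro subsetI)
        fix \<omega> assume \<omega>: "\<omega> \<in> {\<omega>\<in>space M. \<epsilon> <
     measure lborel (symdiff
       {ginv (est n (\<lambda>i\<in>{1..n}. Z (Inr i) \<omega>) (fst (Z (Inl (n+1)) \<omega>)))
              (emp_quantile (\<alpha>/2) {1..n}
                 (\<lambda>i. est n (\<lambda>i\<in>{1..n}. Z (Inr i) \<omega>) (fst (Z (Inl i) \<omega>)) (snd (Z (Inl i) \<omega>))))
        ..
        ginv (est n (\<lambda>i\<in>{1..n}. Z (Inr i) \<omega>) (fst (Z (Inl (n+1)) \<omega>)))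
              (emp_quantile (1 - \<alpha>/2) {1..n}
                 (\<lambda>i. est n (\<lambda>i\<in>{1..n}. Z (Inr i) \<omega>) (fst (Z (Inl i) \<omega>)) (snd (Z (Inl i) \<omega>))))}
       {ginv (F (fst (Z (Inl (n+1)) \<omega>))) (\<alpha>/2) .. ginv (F (fst (Z (Inl (n+1)) \<omega>))) (1 - \<alpha>/2)})}"
        show "\<omega> \<in> Bad n"
        proof (rule ccontr)
          assume nB: "\<omega> \<notin> Bad n"
          have \<omega>s: "\<omega> \<in> space M" using \<omega> by simp
          note k1 = key[OF elim \<omega>s b12(1)] and k2 = key[OF elim \<omega>s b12(2)]
          have h1: "\<bar>ginv (est n (\<lambda>i\<in>{1..n}. Z (Inr i) \<omega>) (fst (Z (Inl (n+1)) \<omega>)))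
              (emp_quantile (\<alpha>/2) {1..n}
                 (\<lambda>i. est n (\<lambda>i\<in>{1..n}. Z (Inr i) \<omega>) (fst (Z (Inl i) \<omega>)) (snd (Z (Inl i) \<omega>))))
               - ginv (F (fst (Z (Inl (n+1)) \<omega>))) (\<alpha>/2)\<bar> \<le> h"
            using k1 nB unfolding Bad_def Dn_def by blast
          have h2: "\<bar>ginv (est n (\<lambda>i\<in>{1..n}. Z (Inr i) \<omega>) (fst (Z (Inl (n+1)) \<omega>)))
              (emp_quantile (1 - \<alpha>/2) {1..n}
                 (\<lambda>i. est n (\<lambda>i\<in>{1..n}. Z (Inr i) \<omega>) (fst (Z (Inl i) \<omega>)) (snd (Z (Inl i) \<omega>))))
               - ginv (F (fst (Z (Inl (n+1)) \<omega>))) (1 - \<alpha>/2)\<bar> \<le> h"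
            using k2 nB unfolding Bad_def Dn_def by blast
          have "measure lborel (symdiff
       {ginv (est n (\<lambda>i\<in>{1..n}. Z (Inr i) \<omega>) (fst (Z (Inl (n+1)) \<omega>)))
              (emp_quantile (\<alpha>/2) {1..n}
                 (\<lambda>i. est n (\<lambda>i\<in>{1..n}. Z (Inr i) \<omega>) (fst (Z (Inl i) \<omega>)) (snd (Z (Inl i) \<omega>))))
        ..
        ginv (est n (\<lambda>i\<in>{1..n}. Z (Inr i) \<omega>) (fst (Z (Inl (n+1)) \<omega>)))
              (emp_quantile (1 - \<alpha>/2) {1..n}
                 (\<lambda>i. est n (\<lambda>i\<in>{1..n}. Z (Inr i) \<omega>) (fst (Z (Inl i) \<omega>)) (snd (Z (Inl i) \<omega>))))}
       {ginv (F (fst (Z (Inl (n+1)) \<omega>))) (\<alpha>/2) .. ginv (F (fst (Z (Inl (n+1)) \<omega>))) (1 - \<alpha>/2)}) \<le> h + h"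
            by (rule order.trans[OF symdiff_Icc add_mono[OF h1 h2]])
          then show False using \<omega> h(3) by simp
        qed
      qed
      have "measure M {\<omega>\<in>space M. \<epsilon> <
     measure lborel (symdiff
       {ginv (est n (\<lambda>i\<in>{1..n}. Z (Inr i) \<omega>) (fst (Z (Inl (n+1)) \<omega>)))
              (emp_quantile (\<alpha>/2) {1..n}
                 (\<lambda>i. est n (\<lambda>i\<in>{1..n}. Z (Inr i) \<omega>) (fst (Z (Inl i) \<omega>)) (snd (Z (Inl i) \<omega>))))
        ..
        ginv (est n (\<lambda>i\<in>{1..n}. Z (Inr i) \<omega>) (fst (Z (Inl (n+1)) \<omega>)))
              (emp_quantile (1 - \<alpha>/2) {1..n}
                 (\<lambda>i. est n (\<lambda>i\<in>{1..n}. Z (Inr i) \<omega>) (fst (Z (Inl i) \<omega>)) (snd (Z (Inl i) \<omega>))))}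
       {ginv (F (fst (Z (Inl (n+1)) \<omega>))) (\<alpha>/2) .. ginv (F (fst (Z (Inl (n+1)) \<omega>))) (1 - \<alpha>/2)})} \<le> measure M (Bad n)"
        by (rule measure_le_sets[OF finite_measure_axioms sub Badm[OF elim]])
      then show ?case using Badle[OF elim] by simp
    qed
    have ex: "(\<lambda>n. exp (- 2 * real n * (c/4)\<^sup>2)) \<longlonglongrightarrow> 0"
    proof -
      have eq: "(\<lambda>n. exp (- 2 * real n * (c/4)\<^sup>2)) = (\<lambda>n. exp (- 2 * (c/4)\<^sup>2) ^ n)"
        by (rule ext) (subst exp_of_nat_mult[symmetric], simp add: algebra_simps)
      have "norm (exp (- 2 * (c/4)\<^sup>2)) < 1" using c by simp
      then show ?thesis unfolding eq by (rule LIMSEQ_power_zero)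
    qed
    have r: "(\<lambda>n. \<bar>\<eta> n\<bar>) \<longlonglongrightarrow> 0" using tendsto_rabs[OF A1(1)] by simp
    have c2': "c\<^sup>2 \<noteq> 0" "(c/2)\<^sup>2 \<noteq> 0" using c by auto
    have t1: "(\<lambda>n. \<rho> n + \<bar>\<eta> n\<bar> / c\<^sup>2) \<longlonglongrightarrow> 0"
      using tendsto_add[OF A1(2) tendsto_divide[OF r tendsto_const c2'(1)]] by simp
    have t2: "(\<lambda>n. \<rho> n + \<bar>\<eta> n\<bar> / (c/2)\<^sup>2) \<longlonglongrightarrow> 0"
      using tendsto_add[OF A1(2) tendsto_divide[OF r tendsto_const c2'(2)]] by simp
    have t3: "(\<lambda>n. 4 / c * (\<rho> n + \<bar>\<eta> n\<bar> / (c/2)\<^sup>2)) \<longlonglongrightarrow> 0"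
      using tendsto_mult[OF tendsto_const t2, of "4 / c"] by simp
    have t4: "(\<lambda>n. 4 * exp (- 2 * real n * (c/4)\<^sup>2)) \<longlonglongrightarrow> 0"
      using tendsto_mult[OF tendsto_const ex, of 4] by simp
    show "bound \<longlonglongrightarrow> 0"
      using tendsto_add[OF tendsto_add[OF t1 t3] t4] by (simp add: bound_def)
  qed
qed

end
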